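(* Let $(H,\Delta)$ be a Hopf algebra and $(A,\alpha)$ a Galois coaction with $H$-coinvariant local units. Let $p\in M(A^\alpha)$ be an idempotent with $A^\alpha pA^\alpha=A^\alpha$. Then $\alpha$ restricts to a Galois coaction $\beta$ on $B=pAp$, and $(B,\beta)$ is $H$-equivariantly Morita equivalent to $(A,\alpha)$ (via the context $(Ap,pA)$).
   Context: An $H$-comodule algebra $(A,\alpha)$ is a (possibly non-unital) algebra with algebra map $\alpha:A\to A\otimes H$ making $A$ a right $H$-comodule; $A^\alpha=\{a:\alpha(a)=a\otimes1\}$; $H$-coinvariant local units: every finite subset of $A$ admits an idempotent $e\in A^\alpha$ acting as two-sided unit on it. $(A,\alpha)$ is a Galois coaction if the Galois map $A\otimes_{A^\alpha}A\to A\otimes H$, $a\otimes b\mapsto(a\otimes1)\alpha(b)$, is bijective. $M(D)$ is the multiplier algebra of $D$ (pairs $(\lambda,\rho)$ of linear maps on $D$ with $\lambda(xy)=\lambda(x)y$, $\rho(xy)=x\rho(y)$, $x\lambda(y)=\rho(x)y$); since $A^\alpha\subseteq A$ is non-degenerate under the coinvariant local units assumption, $M(A^\alpha)\subseteq M(A)$, so $pAp$ makes sense. An $H$-equivariant Morita context between comodule algebras is a Morita context (associative pairings $A_{ij}\times A_{jl}\to A_{il}$) all of whose spaces are $H$-comodules and whose multiplications are comodule maps; strict if all $A_{ij}\otimes_{A_{jj}}A_{ji}\to A_{ii}$ are bijective; equivariant Morita equivalence means existence of a strict equivariant Morita context. *)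

theory Defs
  imports Complex_Main
begin

(* Conventions.  All vector spaces are over a field 'k.  Scalar        *)
(* multiplications are explicit functions.  An element of a tensor      *)
(* product V (x)_R W of (sub)spaces is represented by a finite formal   *)
(* sum, i.e. a list of pairs (a list of triples for triple tensors).    *)
(* Two formal sums are equal in the tensor product iff every            *)
(* (R-balanced) bilinear functional V x W -> k takes the same value on  *)
(* them; since the algebraic dual of a vector space separates points,   *)
(* this is exactly equality in the tensor product.                      *)

definition lsubspace :: "('k::field \<Rightarrow> 'v::ab_group_add \<Rightarrow> 'v) \<Rightarrow> 'v set \<Rightarrow> bool" where
  "lsubspace sc V \<longleftrightarrow> 0 \<in> V \<and> (\<forall>x\<in>V. \<forall>y\<in>V. x + y \<in> V) \<and> (\<forall>c. \<forall>x\<in>V. sc c x \<in> V)"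

definition bilin_on ::
  "('k::field \<Rightarrow> 'v::ab_group_add \<Rightarrow> 'v) \<Rightarrow> ('k \<Rightarrow> 'w::ab_group_add \<Rightarrow> 'w) \<Rightarrow> 'v set \<Rightarrow> 'w set \<Rightarrow> ('v \<Rightarrow> 'w \<Rightarrow> 'k) \<Rightarrow> bool" where
  "bilin_on sv sw V W \<phi> \<longleftrightarrow>
     (\<forall>a\<in>V. \<forall>a'\<in>V. \<forall>b\<in>W. \<phi> (a + a') b = \<phi> a b + \<phi> a' b) \<and>
     (\<forall>a\<in>V. \<forall>b\<in>W. \<forall>b'\<in>W. \<phi> a (b + b') = \<phi> a b + \<phi> a b') \<and>
     (\<forall>c. \<forall>a\<in>V. \<forall>b\<in>W. \<phi> (sv c a) b = c * \<phi> a b \<and> \<phi> a (sw c b) = c * \<phi> a b)"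

definition tensor_eq ::
  "('k::field \<Rightarrow> 'v::ab_group_add \<Rightarrow> 'v) \<Rightarrow> ('k \<Rightarrow> 'w::ab_group_add \<Rightarrow> 'w) \<Rightarrow> 'v set \<Rightarrow> 'w set \<Rightarrow>
     ('v \<times> 'w) list \<Rightarrow> ('v \<times> 'w) list \<Rightarrow> bool" where
  "tensor_eq sv sw V W xs ys \<longleftrightarrow>
     (\<forall>\<phi>. bilin_on sv sw V W \<phi> \<longrightarrow> (\<Sum>(a,b)\<leftarrow>xs. \<phi> a b) = (\<Sum>(a,b)\<leftarrow>ys. \<phi> a b))"

definition trilin_on ::
  "('k::field \<Rightarrow> 'u::ab_group_add \<Rightarrow> 'u) \<Rightarrow> ('k \<Rightarrow> 'v::ab_group_add \<Rightarrow> 'v) \<Rightarrow> ('k \<Rightarrow> 'w::ab_group_add \<Rightarrow> 'w) \<Rightarrow>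
     'u set \<Rightarrow> 'v set \<Rightarrow> 'w set \<Rightarrow> ('u \<Rightarrow> 'v \<Rightarrow> 'w \<Rightarrow> 'k) \<Rightarrow> bool" where
  "trilin_on su sv sw U V W \<phi> \<longleftrightarrow>
     (\<forall>a\<in>U. \<forall>a'\<in>U. \<forall>b\<in>V. \<forall>d\<in>W. \<phi> (a + a') b d = \<phi> a b d + \<phi> a' b d) \<and>
     (\<forall>a\<in>U. \<forall>b\<in>V. \<forall>b'\<in>V. \<forall>d\<in>W. \<phi> a (b + b') d = \<phi> a b d + \<phi> a b' d) \<and>
     (\<forall>a\<in>U. \<forall>b\<in>V. \<forall>d\<in>W. \<forall>d'\<in>W. \<phi> a b (d + d') = \<phi> a b d + \<phi> a b d') \<and>
     (\<forall>c. \<forall>a\<in>U. \<forall>b\<in>V. \<forall>d\<in>W.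
        \<phi> (su c a) b d = c * \<phi> a b d \<and> \<phi> a (sv c b) d = c * \<phi> a b d \<and> \<phi> a b (sw c d) = c * \<phi> a b d)"

definition tensor3_eq ::
  "('k::field \<Rightarrow> 'u::ab_group_add \<Rightarrow> 'u) \<Rightarrow> ('k \<Rightarrow> 'v::ab_group_add \<Rightarrow> 'v) \<Rightarrow> ('k \<Rightarrow> 'w::ab_group_add \<Rightarrow> 'w) \<Rightarrow>
     'u set \<Rightarrow> 'v set \<Rightarrow> 'w set \<Rightarrow> ('u \<times> 'v \<times> 'w) list \<Rightarrow> ('u \<times> 'v \<times> 'w) list \<Rightarrow> bool" where
  "tensor3_eq su sv sw U V W xs ys \<longleftrightarrow>
     (\<forall>\<phi>. trilin_on su sv sw U V W \<phi> \<longrightarrow>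
        (\<Sum>(a,b,d)\<leftarrow>xs. \<phi> a b d) = (\<Sum>(a,b,d)\<leftarrow>ys. \<phi> a b d))"

text \<open>Equality in the balanced tensor product V (x)_R W, where V, W, R are
  subsets of one algebra and R acts by the algebra multiplication.\<close>
definition btensor_eq ::
  "('k::field \<Rightarrow> 'a::ring \<Rightarrow> 'a) \<Rightarrow> 'a set \<Rightarrow> 'a set \<Rightarrow> 'a set \<Rightarrow> ('a \<times> 'a) list \<Rightarrow> ('a \<times> 'a) list \<Rightarrow> bool" where
  "btensor_eq sc V W R xs ys \<longleftrightarrow>
     (\<forall>\<phi>. bilin_on sc sc V W \<phi> \<and> (\<forall>a\<in>V. \<forall>r\<in>R. \<forall>b\<in>W. \<phi> (a * r) b = \<phi> a (r * b)) \<longrightarrow>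
        (\<Sum>(a,b)\<leftarrow>xs. \<phi> a b) = (\<Sum>(a,b)\<leftarrow>ys. \<phi> a b))"

definition tprod :: "('a::times \<times> 'b::times) list \<Rightarrow> ('a \<times> 'b) list \<Rightarrow> ('a \<times> 'b) list" where
  "tprod xs ys = [(fst p * fst q, snd p * snd q). p \<leftarrow> xs, q \<leftarrow> ys]"

definition algebra_over :: "('k::field \<Rightarrow> 'a::ring \<Rightarrow> 'a) \<Rightarrow> bool" where
  "algebra_over sc \<longleftrightarrow> vector_space sc \<and>
     (\<forall>c x y. sc c (x * y) = sc c x * y \<and> sc c (x * y) = x * sc c y)"

definition hopf_algebra ::
  "('k::field \<Rightarrow> 'h::ring_1 \<Rightarrow> 'h) \<Rightarrow> ('h \<Rightarrow> ('h \<times> 'h) list) \<Rightarrow> ('h \<Rightarrow> 'k) \<Rightarrow> ('h \<Rightarrow> 'h) \<Rightarrow> bool" where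
  "hopf_algebra sc \<Delta> \<epsilon> S \<longleftrightarrow>
     algebra_over sc \<and>
     (\<forall>h g. tensor_eq sc sc UNIV UNIV (\<Delta> (h + g)) (\<Delta> h @ \<Delta> g)) \<and>
     (\<forall>c h. tensor_eq sc sc UNIV UNIV (\<Delta> (sc c h)) (map (\<lambda>(x,y). (sc c x, y)) (\<Delta> h))) \<and>
     (\<forall>h g. tensor_eq sc sc UNIV UNIV (\<Delta> (h * g)) (tprod (\<Delta> h) (\<Delta> g))) \<and>
     tensor_eq sc sc UNIV UNIV (\<Delta> 1) [(1, 1)] \<and>
     (\<forall>h. tensor3_eq sc sc sc UNIV UNIV UNIV
        (concat (map (\<lambda>(x,y). map (\<lambda>(y1,y2). (x, y1, y2)) (\<Delta> y)) (\<Delta> h)))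
        (concat (map (\<lambda>(x,y). map (\<lambda>(x1,x2). (x1, x2, y)) (\<Delta> x)) (\<Delta> h)))) \<and>
     (\<forall>h g. \<epsilon> (h + g) = \<epsilon> h + \<epsilon> g) \<and> (\<forall>c h. \<epsilon> (sc c h) = c * \<epsilon> h) \<and>
     (\<forall>h g. \<epsilon> (h * g) = \<epsilon> h * \<epsilon> g) \<and> \<epsilon> 1 = 1 \<and>
     (\<forall>h. (\<Sum>(x,y)\<leftarrow>\<Delta> h. sc (\<epsilon> x) y) = h) \<and>
     (\<forall>h. (\<Sum>(x,y)\<leftarrow>\<Delta> h. sc (\<epsilon> y) x) = h) \<and>
     (\<forall>h g. S (h + g) = S h + S g) \<and> (\<forall>c h. S (sc c h) = sc c (S h)) \<and>
     (\<forall>h. (\<Sum>(x,y)\<leftarrow>\<Delta> h. S x * y) = sc (\<epsilon> h) 1) \<and>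
     (\<forall>h. (\<Sum>(x,y)\<leftarrow>\<Delta> h. x * S y) = sc (\<epsilon> h) 1)"

definition comodule_on ::
  "('k::field \<Rightarrow> 'a::ring \<Rightarrow> 'a) \<Rightarrow> ('k \<Rightarrow> 'h::ring_1 \<Rightarrow> 'h) \<Rightarrow> ('h \<Rightarrow> ('h \<times> 'h) list) \<Rightarrow> ('h \<Rightarrow> 'k) \<Rightarrow>
     'a set \<Rightarrow> ('a \<Rightarrow> ('a \<times> 'h) list) \<Rightarrow> bool" where
  "comodule_on scA scH \<Delta> \<epsilon> V \<gamma> \<longleftrightarrow>
     lsubspace scA V \<and>
     (\<forall>v\<in>V. set (\<gamma> v) \<subseteq> V \<times> UNIV) \<and>
     (\<forall>v\<in>V. \<forall>w\<in>V. tensor_eq scA scH V UNIV (\<gamma> (v + w)) (\<gamma> v @ \<gamma> w)) \<and>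
     (\<forall>c. \<forall>v\<in>V. tensor_eq scA scH V UNIV (\<gamma> (scA c v)) (map (\<lambda>(x,h). (scA c x, h)) (\<gamma> v))) \<and>
     (\<forall>v\<in>V. tensor3_eq scA scH scH V UNIV UNIV
        (concat (map (\<lambda>(x,h). map (\<lambda>(h1,h2). (x, h1, h2)) (\<Delta> h)) (\<gamma> v)))
        (concat (map (\<lambda>(x,h). map (\<lambda>(x1,h1). (x1, h1, h)) (\<gamma> x)) (\<gamma> v)))) \<and>
     (\<forall>v\<in>V. (\<Sum>(x,h)\<leftarrow>\<gamma> v. scA (\<epsilon> h) x) = v)"

definition comodule_algebra_on ::
  "('k::field \<Rightarrow> 'a::ring \<Rightarrow> 'a) \<Rightarrow> ('k \<Rightarrow> 'h::ring_1 \<Rightarrow> 'h) \<Rightarrow> ('h \<Rightarrow> ('h \<times> 'h) list) \<Rightarrow> ('h \<Rightarrow> 'k) \<Rightarrow>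
     'a set \<Rightarrow> ('a \<Rightarrow> ('a \<times> 'h) list) \<Rightarrow> bool" where
  "comodule_algebra_on scA scH \<Delta> \<epsilon> V \<gamma> \<longleftrightarrow>
     comodule_on scA scH \<Delta> \<epsilon> V \<gamma> \<and>
     (\<forall>v\<in>V. \<forall>w\<in>V. v * w \<in> V) \<and>
     (\<forall>v\<in>V. \<forall>w\<in>V. tensor_eq scA scH V UNIV (\<gamma> (v * w)) (tprod (\<gamma> v) (\<gamma> w)))"

definition coinv ::
  "('k::field \<Rightarrow> 'a::ring \<Rightarrow> 'a) \<Rightarrow> ('k \<Rightarrow> 'h::ring_1 \<Rightarrow> 'h) \<Rightarrow> 'a set \<Rightarrow> ('a \<Rightarrow> ('a \<times> 'h) list) \<Rightarrow> 'a set" where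
  "coinv scA scH V \<gamma> = {v \<in> V. tensor_eq scA scH V UNIV (\<gamma> v) [(v, 1)]}"

definition galois_map :: "('a::ring \<Rightarrow> ('a \<times> 'h) list) \<Rightarrow> ('a \<times> 'a) list \<Rightarrow> ('a \<times> 'h) list" where
  "galois_map \<gamma> xs = concat (map (\<lambda>(a,b). map (\<lambda>(c,h). (a * c, h)) (\<gamma> b)) xs)"

text \<open>(V, gamma) is a Galois coaction: comodule algebra whose Galois map
  V (x)_{V^gamma} V -> V (x) H is bijective.\<close>
definition galois_coaction ::
  "('k::field \<Rightarrow> 'a::ring \<Rightarrow> 'a) \<Rightarrow> ('k \<Rightarrow> 'h::ring_1 \<Rightarrow> 'h) \<Rightarrow> ('h \<Rightarrow> ('h \<times> 'h) list) \<Rightarrow> ('h \<Rightarrow> 'k) \<Rightarrow>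
     'a set \<Rightarrow> ('a \<Rightarrow> ('a \<times> 'h) list) \<Rightarrow> bool" where
  "galois_coaction scA scH \<Delta> \<epsilon> V \<gamma> \<longleftrightarrow>
     comodule_algebra_on scA scH \<Delta> \<epsilon> V \<gamma> \<and>
     (\<forall>xs\<in>lists (V \<times> V). \<forall>ys\<in>lists (V \<times> V).
        tensor_eq scA scH V UNIV (galois_map \<gamma> xs) (galois_map \<gamma> ys) \<longrightarrow>
        btensor_eq scA V V (coinv scA scH V \<gamma>) xs ys) \<and>
     (\<forall>zs\<in>lists (V \<times> (UNIV::'h set)). \<exists>xs\<in>lists (V \<times> V).
        tensor_eq scA scH V UNIV (galois_map \<gamma> xs) zs)"

definition coinv_local_units ::
  "('k::field \<Rightarrow> 'a::ring \<Rightarrow> 'a) \<Rightarrow> ('k \<Rightarrow> 'h::ring_1 \<Rightarrow> 'h) \<Rightarrow> ('a \<Rightarrow> ('a \<times> 'h) list) \<Rightarrow> bool" where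
  "coinv_local_units scA scH \<alpha> \<longleftrightarrow>
     (\<forall>F. finite F \<longrightarrow> (\<exists>e\<in>coinv scA scH UNIV \<alpha>. e * e = e \<and> (\<forall>a\<in>F. e * a = a \<and> a * e = a)))"

definition multiplier_on :: "('k::field \<Rightarrow> 'a::ring \<Rightarrow> 'a) \<Rightarrow> 'a set \<Rightarrow> ('a \<Rightarrow> 'a) \<Rightarrow> ('a \<Rightarrow> 'a) \<Rightarrow> bool" where
  "multiplier_on sc D l r \<longleftrightarrow>
     (\<forall>x\<in>D. l x \<in> D \<and> r x \<in> D) \<and>
     (\<forall>x\<in>D. \<forall>y\<in>D. l (x + y) = l x + l y \<and> r (x + y) = r x + r y) \<and>
     (\<forall>c. \<forall>x\<in>D. l (sc c x) = sc c (l x) \<and> r (sc c x) = sc c (r x)) \<and>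
     (\<forall>x\<in>D. \<forall>y\<in>D. l (x * y) = l x * y \<and> r (x * y) = x * r y \<and> x * l y = r x * y)"

definition idempotent_multiplier :: "'a set \<Rightarrow> ('a \<Rightarrow> 'a) \<Rightarrow> ('a \<Rightarrow> 'a) \<Rightarrow> bool" where
  "idempotent_multiplier D l r \<longleftrightarrow> (\<forall>x\<in>D. l (l x) = l x \<and> r (r x) = r x)"

text \<open>Extension of a multiplier of the coinvariant subalgebra R to a multiplier
  of A (the inclusion M(A^alpha) into M(A)) using coinvariant local units:
  p a = (p e) a for e in R with e a = a, and a p = a (e p) for a e = a.\<close>
definition mext_l :: "'a::ring set \<Rightarrow> ('a \<Rightarrow> 'a) \<Rightarrow> 'a \<Rightarrow> 'a" where
  "mext_l R l a = l (SOME e. e \<in> R \<and> e * a = a) * a"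

definition mext_r :: "'a::ring set \<Rightarrow> ('a \<Rightarrow> 'a) \<Rightarrow> 'a \<Rightarrow> 'a" where
  "mext_r R r a = a * r (SOME e. e \<in> R \<and> a * e = a)"

text \<open>An H-equivariant strict Morita context whose four spaces Sp i j
  (i, j in {1,2}) are subspaces of one algebra 'a, with pairings given by the
  multiplication of 'a, and coactions gam i j.\<close>
definition strict_equivariant_morita_context ::
  "('k::field \<Rightarrow> 'a::ring \<Rightarrow> 'a) \<Rightarrow> ('k \<Rightarrow> 'h::ring_1 \<Rightarrow> 'h) \<Rightarrow> ('h \<Rightarrow> ('h \<times> 'h) list) \<Rightarrow> ('h \<Rightarrow> 'k) \<Rightarrow>
     (nat \<Rightarrow> nat \<Rightarrow> 'a set) \<Rightarrow> (nat \<Rightarrow> nat \<Rightarrow> 'a \<Rightarrow> ('a \<times> 'h) list) \<Rightarrow> bool" where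
  "strict_equivariant_morita_context scA scH \<Delta> \<epsilon> Sp gam \<longleftrightarrow>
     (\<forall>i\<in>{1,2}. \<forall>j\<in>{1,2}. comodule_on scA scH \<Delta> \<epsilon> (Sp i j) (gam i j)) \<and>
     (\<forall>i\<in>{1,2}. \<forall>j\<in>{1,2}. \<forall>l\<in>{1,2}. \<forall>x\<in>Sp i j. \<forall>y\<in>Sp j l.
        x * y \<in> Sp i l \<and>
        tensor_eq scA scH (Sp i l) UNIV (gam i l (x * y)) (tprod (gam i j x) (gam j l y))) \<and>
     (\<forall>i\<in>{1,2}. \<forall>j\<in>{1,2}.
        (\<forall>xs\<in>lists (Sp i j \<times> Sp j i). \<forall>ys\<in>lists (Sp i j \<times> Sp j i).
           (\<Sum>(x,y)\<leftarrow>xs. x * y) = (\<Sum>(x,y)\<leftarrow>ys. x * y) \<longrightarrow>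
           btensor_eq scA (Sp i j) (Sp j i) (Sp j j) xs ys) \<and>
        (\<forall>z\<in>Sp i i. \<exists>xs\<in>lists (Sp i j \<times> Sp j i). (\<Sum>(x,y)\<leftarrow>xs. x * y) = z))"

text \<open>The context (A p, p A) between B = p A p (index 1) and A (index 2):
  A_11 = B, A_12 = pA, A_21 = Ap, A_22 = A.\<close>
definition corner_context :: "'a set \<Rightarrow> 'a set \<Rightarrow> 'a set \<Rightarrow> nat \<Rightarrow> nat \<Rightarrow> 'a set" where
  "corner_context B pA Ap i j =
     (if i = 1 \<and> j = 1 then B else if i = 1 then pA else if j = 1 then Ap else UNIV)"

end

theory Submission
  imports Defs
begin

lemma te_D: "tensor_eq sv sw V W xs ys \<Longrightarrow> bilin_on sv sw V W \<phi> \<Longrightarrow> (\<Sum>(a,b)\<leftarrow>xs. \<phi> a b) = (\<Sum>(a,b)\<leftarrow>ys. \<phi> a b)"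
  unfolding tensor_eq_def by blast
lemma te_refl: "tensor_eq sv sw V W xs xs" unfolding tensor_eq_def by blast
lemma te_sym: "tensor_eq sv sw V W xs ys \<Longrightarrow> tensor_eq sv sw V W ys xs" unfolding tensor_eq_def by metis
lemma te_trans: "tensor_eq sv sw V W xs ys \<Longrightarrow> tensor_eq sv sw V W ys zs \<Longrightarrow> tensor_eq sv sw V W xs zs" unfolding tensor_eq_def by metis
lemma bilin_mono: "bilin_on sv sw V' W' \<phi> \<Longrightarrow> V \<subseteq> V' \<Longrightarrow> W \<subseteq> W' \<Longrightarrow> bilin_on sv sw V W \<phi>"
  unfolding bilin_on_def by blast
lemma te_mono: "tensor_eq sv sw V W xs ys \<Longrightarrow> V \<subseteq> V' \<Longrightarrow> W \<subseteq> W' \<Longrightarrow> tensor_eq sv sw V' W' xs ys"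
  unfolding tensor_eq_def using bilin_mono by blast

lemma sum_apfst: "(\<Sum>(a,b)\<leftarrow>map (apfst f) xs. \<phi> a b) = (\<Sum>(a,b)\<leftarrow>xs. \<phi> (f a) b)"
  by (induct xs) auto

lemma sum_tprod: "(\<Sum>(a,b)\<leftarrow>tprod xs ys. \<phi> a b) = (\<Sum>(x,h)\<leftarrow>xs. \<Sum>(y,g)\<leftarrow>ys. \<phi> (x*y) (h*g))"
  unfolding tprod_def by (induct xs) (auto simp: case_prod_unfold o_def)

definition lin :: "('k::field \<Rightarrow> 'a::ab_group_add \<Rightarrow> 'a) \<Rightarrow> ('a \<Rightarrow> 'a) \<Rightarrow> bool" where
  "lin sc f \<longleftrightarrow> (\<forall>x y. f (x + y) = f x + f y) \<and> (\<forall>c x. f (sc c x) = sc c (f x))"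

lemma te_push:
  assumes "tensor_eq sv sw UNIV UNIV xs ys" "lin sv f" "\<And>x. f x \<in> V"
  shows "tensor_eq sv sw V UNIV (map (apfst f) xs) (map (apfst f) ys)"
  unfolding tensor_eq_def sum_apfst
proof safe
  fix \<phi> assume b: "bilin_on sv sw V UNIV \<phi>"
  have "bilin_on sv sw UNIV UNIV (\<lambda>a b. \<phi> (f a) b)"
    using b assms(2,3) unfolding bilin_on_def lin_def by simp
  then show "(\<Sum>(a,b)\<leftarrow>xs. \<phi> (f a) b) = (\<Sum>(a,b)\<leftarrow>ys. \<phi> (f a) b)"
    using assms(1) te_D by blast
qed

lemma bilin_zero: "bilin_on sv sw V W \<phi> \<Longrightarrow> a \<in> V \<Longrightarrow> b \<in> W \<Longrightarrow> lsubspace sv V \<Longrightarrow> \<phi> 0 b = 0"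
  unfolding bilin_on_def lsubspace_def by (metis add_cancel_right_right add.right_neutral)

lemma sum_list_addf2: "(\<Sum>(a,b)\<leftarrow>xs. f a b + g a b) = (\<Sum>(a,b)\<leftarrow>xs. f a b) + (\<Sum>(a,b)\<leftarrow>xs. (g a b::'c::comm_monoid_add))"
  by (induct xs) (auto simp: add_ac)

lemma algD: assumes "algebra_over sa" shows "sa c x * y = sa c (x * y)" "x * sa c y = sa c (x * y)" "vector_space sa"
  using assms unfolding algebra_over_def by metis+
lemma sum_list_cmult2: "(\<Sum>(a,b)\<leftarrow>xs. (c::'k::field) * f a b) = c * (\<Sum>(a,b)\<leftarrow>xs. f a b)"
  by (induct xs) (auto simp: algebra_simps)

lemma te_tprod1:
  assumes "tensor_eq sa sh UNIV UNIV xs xs'" "algebra_over sa" "algebra_over sh"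
  shows "tensor_eq sa sh UNIV UNIV (tprod xs ys) (tprod xs' ys)"
  unfolding tensor_eq_def sum_tprod
proof safe
  fix \<phi> assume b: "bilin_on sa sh UNIV UNIV \<phi>"
  have "bilin_on sa sh UNIV UNIV (\<lambda>x h. \<Sum>(y,g)\<leftarrow>ys. \<phi> (x*y) (h*g))"
    using b assms(2,3) unfolding bilin_on_def
    by (simp add: algD distrib_right sum_list_addf2 sum_list_cmult2)
  then show "(\<Sum>(x,h)\<leftarrow>xs. \<Sum>(y,g)\<leftarrow>ys. \<phi> (x*y) (h*g)) = (\<Sum>(x,h)\<leftarrow>xs'. \<Sum>(y,g)\<leftarrow>ys. \<phi> (x*y) (h*g))"
    using assms(1) te_D by blast
qed

lemma sum_swap2: "(\<Sum>(x,h)\<leftarrow>xs. \<Sum>(y,g)\<leftarrow>ys. f x h y g) = (\<Sum>(y,g)\<leftarrow>ys. \<Sum>(x,h)\<leftarrow>xs. (f x h y g::'c::comm_monoid_add))"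
  by (induct xs) (auto simp: sum_list_addf2[symmetric])

lemma te_tprod2:
  assumes "tensor_eq sa sh UNIV UNIV ys ys'" "algebra_over sa" "algebra_over sh"
  shows "tensor_eq sa sh UNIV UNIV (tprod xs ys) (tprod xs ys')"
  unfolding tensor_eq_def sum_tprod
proof safe
  fix \<phi> assume b: "bilin_on sa sh UNIV UNIV \<phi>"
  have "bilin_on sa sh UNIV UNIV (\<lambda>y g. \<Sum>(x,h)\<leftarrow>xs. \<phi> (x*y) (h*g))"
    using b assms(2,3) unfolding bilin_on_def
    by (simp add: algD distrib_left sum_list_addf2 sum_list_cmult2)
  then show "(\<Sum>(x,h)\<leftarrow>xs. \<Sum>(y,g)\<leftarrow>ys. \<phi> (x*y) (h*g)) = (\<Sum>(x,h)\<leftarrow>xs. \<Sum>(y,g)\<leftarrow>ys'. \<phi> (x*y) (h*g))"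
    using assms(1) te_D by (subst (1 2) sum_swap2) blast
qed


locale L =
  fixes scA :: "'k::field \<Rightarrow> 'a::ring \<Rightarrow> 'a"
    and scH :: "'k \<Rightarrow> 'h::ring_1 \<Rightarrow> 'h"
    and \<Delta> :: "'h \<Rightarrow> ('h \<times> 'h) list" and \<epsilon> :: "'h \<Rightarrow> 'k" and S :: "'h \<Rightarrow> 'h"
    and \<alpha> :: "'a \<Rightarrow> ('a \<times> 'h) list"
    and pl pr :: "'a \<Rightarrow> 'a"
  assumes hopf: "hopf_algebra scH \<Delta> \<epsilon> S"
    and alg: "algebra_over scA"
    and gal: "galois_coaction scA scH \<Delta> \<epsilon> UNIV \<alpha>"
    and lu: "coinv_local_units scA scH \<alpha>"
    and mult: "multiplier_on scA (coinv scA scH UNIV \<alpha>) pl pr"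
    and idem: "idempotent_multiplier (coinv scA scH UNIV \<alpha>) pl pr"
    and full: "module.span scA {x * pl y | x y. x \<in> coinv scA scH UNIV \<alpha> \<and> y \<in> coinv scA scH UNIV \<alpha>}
               = coinv scA scH UNIV \<alpha>"
begin

abbreviation "Rc \<equiv> coinv scA scH UNIV \<alpha>"
abbreviation "Pm \<equiv> mext_l Rc pl"
abbreviation "Qm \<equiv> mext_r Rc pr"
abbreviation "TE \<equiv> tensor_eq scA scH UNIV UNIV"
abbreviation "BL \<equiv> bilin_on scA scH UNIV UNIV"

lemma algH: "algebra_over scH" using hopf unfolding hopf_algebra_def by blast

lemma vsA: "vector_space scA" using alg algD by blast
lemma vsH: "vector_space scH" using algH algD by blast

lemma scA_simps: "scA c (x + y) = scA c x + scA c y" "scA (c + d) x = scA c x + scA d x"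
  "scA c (scA d x) = scA (c * d) x" "scA 1 x = x"
  using vsA unfolding vector_space_def by auto
lemma scA_mult[simp]: "scA c x * y = scA c (x * y)" "x * scA c y = scA c (x * y)"
  using algD[OF alg] by auto
lemma scH_mult[simp]: "scH c x * y = scH c (x * y)" "x * scH c y = scH c (x * y)"
  using algD[OF algH] by auto
lemma scA_zero: "scA c 0 = 0"
  by (metis add_cancel_left_left scA_simps(1))

lemma lin_lmul: "lin scA (\<lambda>x. a * x)" unfolding lin_def by (simp add: distrib_left)
lemma lin_rmul: "lin scA (\<lambda>x. x * a)" unfolding lin_def by (simp add: distrib_right)
lemma lin_id: "lin scA id" unfolding lin_def by simp
lemma lin_comp: "lin scA f \<Longrightarrow> lin scA g \<Longrightarrow> lin scA (f \<circ> g)" unfolding lin_def by simp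

lemma comA: "comodule_algebra_on scA scH \<Delta> \<epsilon> UNIV \<alpha>"
  using gal unfolding galois_coaction_def by blast
lemma a_add: "TE (\<alpha> (v + w)) (\<alpha> v @ \<alpha> w)"
  using comA unfolding comodule_algebra_on_def comodule_on_def by blast
lemma a_sc: "TE (\<alpha> (scA c v)) (map (\<lambda>(x,h). (scA c x, h)) (\<alpha> v))"
  using comA unfolding comodule_algebra_on_def comodule_on_def by blast
lemma a_coass: "tensor3_eq scA scH scH UNIV UNIV UNIV
        (concat (map (\<lambda>(x,h). map (\<lambda>(h1,h2). (x, h1, h2)) (\<Delta> h)) (\<alpha> v)))
        (concat (map (\<lambda>(x,h). map (\<lambda>(x1,h1). (x1, h1, h)) (\<alpha> x)) (\<alpha> v)))"
  using comA unfolding comodule_algebra_on_def comodule_on_def by blast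
lemma a_counit: "(\<Sum>(x,h)\<leftarrow>\<alpha> v. scA (\<epsilon> h) x) = v"
  using comA unfolding comodule_algebra_on_def comodule_on_def by blast
lemma a_mult: "TE (\<alpha> (v * w)) (tprod (\<alpha> v) (\<alpha> w))"
  using comA unfolding comodule_algebra_on_def by blast
lemma a_inj: "TE (galois_map \<alpha> xs) (galois_map \<alpha> ys) \<Longrightarrow> btensor_eq scA UNIV UNIV Rc xs ys"
  using gal unfolding galois_coaction_def by (simp add: lists_UNIV)
lemma a_surj: "\<exists>xs. TE (galois_map \<alpha> xs) zs"
  using gal unfolding galois_coaction_def by (simp add: lists_UNIV)

lemma Rc_iff: "r \<in> Rc \<longleftrightarrow> TE (\<alpha> r) [(r,1)]" unfolding coinv_def by simp

lemma te_lin: "TE xs ys \<Longrightarrow> lin scA f \<Longrightarrow> TE (map (apfst f) xs) (map (apfst f) ys)"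
  using te_push[of scA scH xs ys f UNIV] by simp
lemma te_lmul: "TE xs ys \<Longrightarrow> TE (map (apfst (\<lambda>x. a * x)) xs) (map (apfst (\<lambda>x. a * x)) ys)"
  using te_lin lin_lmul by blast
lemma te_rmul: "TE xs ys \<Longrightarrow> TE (map (apfst (\<lambda>x. x * a)) xs) (map (apfst (\<lambda>x. x * a)) ys)"
  using te_lin lin_rmul by blast

lemma tprod_single1: "tprod [(r, 1::'h)] (ys::('a\<times>'h) list) = map (apfst (\<lambda>x. r * x)) ys"
  unfolding tprod_def by (induct ys) auto
lemma tprod_single2: "tprod (ys::('a\<times>'h) list) [(r, 1::'h)] = map (apfst (\<lambda>x. x * r)) ys"
  unfolding tprod_def by (induct ys) auto

lemma alpha_Rl: "r \<in> Rc \<Longrightarrow> TE (\<alpha> (r * a)) (map (apfst (\<lambda>x. r * x)) (\<alpha> a))"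
  using te_trans[OF a_mult te_tprod1[OF _ alg algH]] Rc_iff tprod_single1 by metis
lemma alpha_Rr: "r \<in> Rc \<Longrightarrow> TE (\<alpha> (a * r)) (map (apfst (\<lambda>x. x * r)) (\<alpha> a))"
  using te_trans[OF a_mult te_tprod2[OF _ alg algH]] Rc_iff tprod_single2 by metis

end

context L begin

lemma units: "finite F \<Longrightarrow> \<exists>e\<in>Rc. e * e = e \<and> (\<forall>a\<in>F. e * a = a \<and> a * e = a)"
  using lu unfolding coinv_local_units_def by blast

lemma m_in: "x \<in> Rc \<Longrightarrow> pl x \<in> Rc" "x \<in> Rc \<Longrightarrow> pr x \<in> Rc"
  using mult unfolding multiplier_on_def by blast+
lemma m_l: "x \<in> Rc \<Longrightarrow> y \<in> Rc \<Longrightarrow> pl (x * y) = pl x * y"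
  using mult unfolding multiplier_on_def by blast
lemma m_r: "x \<in> Rc \<Longrightarrow> y \<in> Rc \<Longrightarrow> pr (x * y) = x * pr y"
  using mult unfolding multiplier_on_def by blast
lemma m_c: "x \<in> Rc \<Longrightarrow> y \<in> Rc \<Longrightarrow> x * pl y = pr x * y"
  using mult unfolding multiplier_on_def by blast
lemma m_idem: "x \<in> Rc \<Longrightarrow> pl (pl x) = pl x" "x \<in> Rc \<Longrightarrow> pr (pr x) = pr x"
  using idem unfolding idempotent_multiplier_def by blast+

lemma unit1: "\<exists>e\<in>Rc. e * a = a \<and> a * e = a"
  using units[of "{a}"] by auto

lemma unitl_some: "(SOME e. e \<in> Rc \<and> e * a = a) \<in> Rc \<and> (SOME e. e \<in> Rc \<and> e * a = a) * a = a"
  by (rule someI_ex) (use unit1 in blast)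
lemma unitr_some: "(SOME e. e \<in> Rc \<and> a * e = a) \<in> Rc \<and> a * (SOME e. e \<in> Rc \<and> a * e = a) = a"
  by (rule someI_ex) (use unit1 in blast)

lemma P_wd: assumes e: "e \<in> Rc" "e * a = a" shows "Pm a = pl e * a"
proof -
  define e0 where "e0 = (SOME e. e \<in> Rc \<and> e * a = a)"
  have e0: "e0 \<in> Rc" "e0 * a = a" using unitl_some unfolding e0_def by auto
  obtain f where f: "f \<in> Rc" "f * e0 = e0" "f * e = e" using units[of "{e0,e}"] by auto
  have "pl e0 * a = pl f * a" by (metis e0 f(1,2) m_l mult.assoc)
  moreover have "pl e * a = pl f * a" by (metis e f(1,3) m_l mult.assoc)
  ultimately show ?thesis unfolding mext_l_def e0_def by simp
qed

lemma Q_wd: assumes e: "e \<in> Rc" "a * e = a" shows "Qm a = a * pr e"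
proof -
  define e0 where "e0 = (SOME e. e \<in> Rc \<and> a * e = a)"
  have e0: "e0 \<in> Rc" "a * e0 = a" using unitr_some unfolding e0_def by auto
  obtain f where f: "f \<in> Rc" "e0 * f = e0" "e * f = e" using units[of "{e0,e}"] by auto
  have "a * pr e0 = a * pr f" by (metis e0 f(1,2) m_r mult.assoc)
  moreover have "a * pr e = a * pr f" by (metis e f(1,3) m_r mult.assoc)
  ultimately show ?thesis unfolding mext_r_def e0_def by simp
qed

lemma P_mult: "Pm (a * b) = Pm a * b"
proof -
  obtain e where "e \<in> Rc" "e * a = a" using unit1 by blast
  then show ?thesis using P_wd[of e a] P_wd[of e "a*b"] by (simp add: mult.assoc[symmetric])
qed
lemma Q_mult: "Qm (a * b) = a * Qm b"
proof -
  obtain e where "e \<in> Rc" "b * e = b" using unit1 by blast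
  then show ?thesis using Q_wd[of e b] Q_wd[of e "a*b"] by (simp add: mult.assoc)
qed

lemma P_lin: "lin scA Pm"
  unfolding lin_def
proof safe
  fix x y
  obtain e where e: "e \<in> Rc" "e * x = x" "e * y = y" using units[of "{x,y}"] by auto
  show "Pm (x + y) = Pm x + Pm y"
    using P_wd[of e] e by (simp add: distrib_left)
next
  fix c x
  obtain e where e: "e \<in> Rc" "e * x = x" using unit1 by blast
  then show "Pm (scA c x) = scA c (Pm x)" using P_wd[of e] by simp
qed
lemma Q_lin: "lin scA Qm"
  unfolding lin_def
proof safe
  fix x y
  obtain e where e: "e \<in> Rc" "x * e = x" "y * e = y" using units[of "{x,y}"] by auto
  show "Qm (x + y) = Qm x + Qm y"
    using Q_wd[of e] e by (simp add: distrib_right)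
next
  fix c x
  obtain e where e: "e \<in> Rc" "x * e = x" using unit1 by blast
  then show "Qm (scA c x) = scA c (Qm x)" using Q_wd[of e] by simp
qed

lemma P_R: "r \<in> Rc \<Longrightarrow> Pm r = pl r"
proof -
  assume r: "r \<in> Rc"
  obtain e where e: "e \<in> Rc" "e * r = r" using unit1 by blast
  show ?thesis using P_wd[OF e] m_l[OF e(1) r] e by simp
qed
lemma Q_R: "r \<in> Rc \<Longrightarrow> Qm r = pr r"
proof -
  assume r: "r \<in> Rc"
  obtain e where e: "e \<in> Rc" "r * e = r" using unit1 by blast
  show ?thesis using Q_wd[OF e] m_r[OF r e(1)] e by simp
qed

lemma P_idem[simp]: "Pm (Pm a) = Pm a"
proof -
  obtain e where e: "e \<in> Rc" "e * a = a" using unit1 by blast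
  have "Pm (Pm a) = Pm (pl e * a)" using P_wd[OF e] by simp
  also have "\<dots> = Pm (pl e) * a" by (rule P_mult)
  also have "\<dots> = pl e * a" using P_R[OF m_in(1)[OF e(1)]] m_idem(1)[OF e(1)] by simp
  finally show ?thesis using P_wd[OF e] by simp
qed
lemma Q_idem[simp]: "Qm (Qm a) = Qm a"
proof -
  obtain e where e: "e \<in> Rc" "a * e = a" using unit1 by blast
  have "Qm (Qm a) = Qm (a * pr e)" using Q_wd[OF e] by simp
  also have "\<dots> = a * Qm (pr e)" by (rule Q_mult)
  also have "\<dots> = a * pr e" using Q_R[OF m_in(2)[OF e(1)]] m_idem(2)[OF e(1)] by simp
  finally show ?thesis using Q_wd[OF e] by simp
qed

lemma PQ_comm: "Pm (Qm a) = Qm (Pm a)"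
proof -
  obtain f where f: "f \<in> Rc" "a * f = a" using unit1 by blast
  have "Pm (Qm a) = Pm a * pr f" using Q_wd[OF f] P_mult by simp
  moreover have "Pm a * f = Pm a" using P_mult f by metis
  ultimately show ?thesis using Q_wd[OF f(1)] by simp
qed

lemma PQ5: "a * Pm b = Qm a * b"
proof -
  obtain e where e: "e \<in> Rc" "e * b = b" using unit1 by blast
  obtain f where f: "f \<in> Rc" "a * f = a" using unit1 by blast
  have "a * pl e * b = a * f * pl e * b" using f by simp
  also have "\<dots> = a * pr f * e * b" using m_c[OF f(1) e(1)] by (simp add: mult.assoc)
  finally show ?thesis using P_wd[OF e] Q_wd[OF f] e by (simp add: mult.assoc)
qed

lemma P_unit: "e \<in> Rc \<Longrightarrow> Pm (e * x) = pl e * x"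
  using P_mult P_R by simp
lemma Q_unit: "e \<in> Rc \<Longrightarrow> Qm (x * e) = x * pr e"
  using Q_mult Q_R by simp

definition Em where "Em a = Pm (Qm a)"

lemma E_idem[simp]: "Em (Em a) = Em a" unfolding Em_def by (metis PQ_comm P_idem Q_idem)
lemma E_lin: "lin scA Em" using lin_comp[OF P_lin Q_lin] unfolding Em_def o_def by simp
lemma EP[simp]: "Pm (Em a) = Em a" unfolding Em_def by simp
lemma EQ[simp]: "Qm (Em a) = Em a" unfolding Em_def by (metis PQ_comm Q_idem)
lemma PE[simp]: "Em (Pm a) = Em a" unfolding Em_def by (metis PQ_comm P_idem)
lemma QE[simp]: "Em (Qm a) = Em a" unfolding Em_def by simp
lemma E_mult: "Em a * Em b = Em (a * Pm b)"
proof -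
  have "Em a * Em b = Pm (Qm a * Pm (Qm b))" unfolding Em_def by (simp add: P_mult)
  also have "\<dots> = Pm (Qm a * Qm b)" by (metis PQ5 Q_idem)
  also have "\<dots> = Em (Qm a * b)" unfolding Em_def by (simp add: Q_mult)
  finally show ?thesis by (simp add: PQ5)
qed

end

context L begin

lemma sum_append2: "(\<Sum>(a,b)\<leftarrow>xs @ ys. \<phi> a b) = (\<Sum>(a,b)\<leftarrow>xs. \<phi> a b) + (\<Sum>(a,b)\<leftarrow>ys. \<phi> a b)"
  by simp

lemma sum_sc: "BL \<phi> \<Longrightarrow> (\<Sum>(a,b)\<leftarrow>map (\<lambda>(x,h). (scA c x, h)) xs. \<phi> a b) = c * (\<Sum>(a,b)\<leftarrow>xs. \<phi> a b)"
  unfolding bilin_on_def by (induct xs) (auto simp: algebra_simps)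

lemma Rc_add: "r \<in> Rc \<Longrightarrow> s \<in> Rc \<Longrightarrow> r + s \<in> Rc"
  unfolding Rc_iff tensor_eq_def
proof safe
  fix \<phi> assume r: "\<forall>\<phi>. BL \<phi> \<longrightarrow> (\<Sum>(a,b)\<leftarrow>\<alpha> r. \<phi> a b) = (\<Sum>(a,b)\<leftarrow>[(r,1)]. \<phi> a b)"
    and s: "\<forall>\<phi>. BL \<phi> \<longrightarrow> (\<Sum>(a,b)\<leftarrow>\<alpha> s. \<phi> a b) = (\<Sum>(a,b)\<leftarrow>[(s,1)]. \<phi> a b)"
    and b: "BL \<phi>"
  have "(\<Sum>(a,b)\<leftarrow>\<alpha> (r+s). \<phi> a b) = (\<Sum>(a,b)\<leftarrow>\<alpha> r @ \<alpha> s. \<phi> a b)" using te_D[OF a_add b] .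
  also have "\<dots> = \<phi> r 1 + \<phi> s 1" using r s b by simp
  also have "\<dots> = \<phi> (r+s) 1" using b unfolding bilin_on_def by simp
  finally show "(\<Sum>(a,b)\<leftarrow>\<alpha> (r+s). \<phi> a b) = (\<Sum>(a,b)\<leftarrow>[(r+s,1)]. \<phi> a b)" by simp
qed

lemma Rc_sc: "r \<in> Rc \<Longrightarrow> scA c r \<in> Rc"
  unfolding Rc_iff tensor_eq_def
proof safe
  fix \<phi> assume r: "\<forall>\<phi>. BL \<phi> \<longrightarrow> (\<Sum>(a,b)\<leftarrow>\<alpha> r. \<phi> a b) = (\<Sum>(a,b)\<leftarrow>[(r,1)]. \<phi> a b)"
    and b: "BL \<phi>"
  have "(\<Sum>(a,b)\<leftarrow>\<alpha> (scA c r). \<phi> a b) = (\<Sum>(a,b)\<leftarrow>map (\<lambda>(x,h). (scA c x, h)) (\<alpha> r). \<phi> a b)"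
    using te_D[OF a_sc b] .
  also have "\<dots> = c * \<phi> r 1" using r b sum_sc by simp
  also have "\<dots> = \<phi> (scA c r) 1" using b unfolding bilin_on_def by simp
  finally show "(\<Sum>(a,b)\<leftarrow>\<alpha> (scA c r). \<phi> a b) = (\<Sum>(a,b)\<leftarrow>[(scA c r,1)]. \<phi> a b)" by simp
qed

lemma Rc_mult: "r \<in> Rc \<Longrightarrow> s \<in> Rc \<Longrightarrow> r * s \<in> Rc"
proof -
  assume r: "r \<in> Rc" and s: "s \<in> Rc"
  have "TE (\<alpha> (r * s)) (map (apfst (\<lambda>x. r * x)) (\<alpha> s))" by (rule alpha_Rl[OF r])
  moreover have "TE (map (apfst (\<lambda>x. r * x)) (\<alpha> s)) (map (apfst (\<lambda>x. r * x)) [(s,1)])"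
    using te_lmul s Rc_iff by blast
  ultimately show ?thesis unfolding Rc_iff using te_trans by fastforce
qed

lemma DEC: assumes "e \<in> Rc" shows "\<exists>ks. set ks \<subseteq> Rc \<times> Rc \<and> e = (\<Sum>(r,s)\<leftarrow>ks. r * pl s)"
proof -
  interpret vector_space scA by (rule vsA)
  have "e \<in> span {x * pl y | x y. x \<in> Rc \<and> y \<in> Rc}" using full assms by simp
  then show ?thesis
  proof (induct rule: span_induct_alt)
    case base
    show ?case by (rule exI[of _ "[]"]) simp
  next
    case (step c x y)
    then obtain a b ks where ab: "x = a * pl b" "a \<in> Rc" "b \<in> Rc" and ks: "set ks \<subseteq> Rc \<times> Rc" "y = (\<Sum>(r,s)\<leftarrow>ks. r * pl s)"
      by blast
    show ?case
      by (rule exI[of _ "(scA c a, b) # ks"]) (use ab ks Rc_sc in auto)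
  qed
qed

lemma alpha_P: "TE (\<alpha> (Pm a)) (map (apfst Pm) (\<alpha> a))"
proof -
  obtain e where e: "e \<in> Rc" "e * a = a" using unit1 by blast
  have "TE (\<alpha> (Pm a)) (map (apfst (\<lambda>x. pl e * x)) (\<alpha> a))"
    using P_wd[OF e] alpha_Rl[OF m_in(1)[OF e(1)]] by simp
  moreover have "TE (map (apfst Pm) (\<alpha> a)) (map (apfst Pm) (map (apfst (\<lambda>x. e * x)) (\<alpha> a)))"
    using te_lin[OF alpha_Rl[OF e(1), of a] P_lin] e(2) te_sym by fastforce
  moreover have "map (apfst Pm) (map (apfst (\<lambda>x. e * x)) (\<alpha> a)) = map (apfst (\<lambda>x. pl e * x)) (\<alpha> a)"
    using P_unit[OF e(1)] by (simp add: apfst_def map_prod_def case_prod_unfold)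
  ultimately show ?thesis using te_trans te_sym by metis
qed

lemma alpha_Q: "TE (\<alpha> (Qm a)) (map (apfst Qm) (\<alpha> a))"
proof -
  obtain e where e: "e \<in> Rc" "a * e = a" using unit1 by blast
  have "TE (\<alpha> (Qm a)) (map (apfst (\<lambda>x. x * pr e)) (\<alpha> a))"
    using Q_wd[OF e] alpha_Rr[OF m_in(2)[OF e(1)]] by simp
  moreover have "TE (map (apfst Qm) (\<alpha> a)) (map (apfst Qm) (map (apfst (\<lambda>x. x * e)) (\<alpha> a)))"
    using te_lin[OF alpha_Rr[OF e(1), of a] Q_lin] e(2) te_sym by fastforce
  moreover have "map (apfst Qm) (map (apfst (\<lambda>x. x * e)) (\<alpha> a)) = map (apfst (\<lambda>x. x * pr e)) (\<alpha> a)"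
    using Q_unit[OF e(1)] by (simp add: apfst_def map_prod_def case_prod_unfold)
  ultimately show ?thesis using te_trans te_sym by metis
qed

definition good where "good \<pi> \<longleftrightarrow> lin scA \<pi> \<and> (\<forall>a. \<pi> (\<pi> a) = \<pi> a) \<and> (\<forall>a. TE (\<alpha> (\<pi> a)) (map (apfst \<pi>) (\<alpha> a)))"

lemma good_P: "good Pm" unfolding good_def using P_lin alpha_P by simp
lemma good_Q: "good Qm" unfolding good_def using Q_lin alpha_Q by simp
lemma good_id: "good id" unfolding good_def using lin_id by (simp add: te_refl)
lemma good_E: "good Em"
proof -
  have "TE (\<alpha> (Em a)) (map (apfst Em) (\<alpha> a))" for a
  proof -
    have "TE (\<alpha> (Pm (Qm a))) (map (apfst Pm) (\<alpha> (Qm a)))" by (rule alpha_P)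
    moreover have "TE (map (apfst Pm) (\<alpha> (Qm a))) (map (apfst Pm) (map (apfst Qm) (\<alpha> a)))"
      using te_lin[OF alpha_Q P_lin] .
    moreover have "map (apfst Pm) (map (apfst Qm) xs) = map (apfst (\<lambda>a. Pm (Qm a))) xs" for xs
      by (induct xs) auto
    ultimately show ?thesis unfolding Em_def using te_trans by metis
  qed
  then show ?thesis unfolding good_def using E_lin by simp
qed

end

lemma sum3_concat: "(\<Sum>(a,b,d)\<leftarrow>concat (map f xs). \<phi> a b d) = (\<Sum>p\<leftarrow>xs. \<Sum>(a,b,d)\<leftarrow>f p. \<phi> a b d)"
  by (induct xs) auto

lemma lin_0: "lin sc f \<Longrightarrow> f 0 = 0" unfolding lin_def by (metis add_cancel_right_right add_0)

lemma lin_sum: "lin sc f \<Longrightarrow> f (\<Sum>(a,b)\<leftarrow>xs. g a b) = (\<Sum>(a,b)\<leftarrow>xs. f (g a b))"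
  by (induct xs) (auto simp: lin_0 lin_def)

lemma sum3_map_h: "(\<Sum>(a,b,d)\<leftarrow>map (\<lambda>(x1,h1). (x1,h1,h)) xs. \<phi> a b d) = (\<Sum>(a,b)\<leftarrow>xs. \<phi> a b h)"
  by (induct xs) auto

context L begin

definition gm where "gm \<pi> x = map (apfst \<pi>) (\<alpha> x)"

lemma good_D: "good \<pi> \<Longrightarrow> lin scA \<pi>" "good \<pi> \<Longrightarrow> \<pi> (\<pi> a) = \<pi> a" "good \<pi> \<Longrightarrow> TE (\<alpha> (\<pi> a)) (map (apfst \<pi>) (\<alpha> a))"
  unfolding good_def by auto

lemma range_fix: "good \<pi> \<Longrightarrow> v \<in> range \<pi> \<Longrightarrow> \<pi> v = v"
  using good_D(2) by auto

lemma gm_alpha: "good \<pi> \<Longrightarrow> v \<in> range \<pi> \<Longrightarrow> TE (gm \<pi> v) (\<alpha> v)"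
  unfolding gm_def using good_D(3) range_fix te_sym by metis

lemma lsub_range: "lin scA \<pi> \<Longrightarrow> lsubspace scA (range \<pi>)"
  unfolding lsubspace_def
proof safe
  assume l: "lin scA \<pi>"
  show "0 \<in> range \<pi>" using lin_0[OF l] by (metis rangeI)
  fix x y show "\<pi> x + \<pi> y \<in> range \<pi>" using l unfolding lin_def by (metis rangeI)
  fix c show "scA c (\<pi> x) \<in> range \<pi>" using l unfolding lin_def by (metis rangeI)
qed

lemma map_sc_apfst: "lin scA \<pi> \<Longrightarrow> map (apfst \<pi>) (map (\<lambda>(x,h). (scA c x, h)) xs) = map (\<lambda>(x,h). (scA c x, h)) (map (apfst \<pi>) xs)"
  by (induct xs) (auto simp: lin_def)

lemma comod_gen: assumes g: "good \<pi>" shows "comodule_on scA scH \<Delta> \<epsilon> (range \<pi>) (gm \<pi>)"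
  unfolding comodule_on_def
proof (intro conjI ballI allI)
  have l: "lin scA \<pi>" using good_D(1)[OF g] .
  show "lsubspace scA (range \<pi>)" by (rule lsub_range[OF l])
  fix v assume v: "v \<in> range \<pi>"
  show "set (gm \<pi> v) \<subseteq> range \<pi> \<times> UNIV" unfolding gm_def by auto
  show "(\<Sum>(x,h)\<leftarrow>gm \<pi> v. scA (\<epsilon> h) x) = v"
  proof -
    have "(\<Sum>(x,h)\<leftarrow>gm \<pi> v. scA (\<epsilon> h) x) = (\<Sum>(x,h)\<leftarrow>\<alpha> v. \<pi> (scA (\<epsilon> h) x))"
      unfolding gm_def sum_apfst using l unfolding lin_def by simp
    also have "\<dots> = \<pi> (\<Sum>(x,h)\<leftarrow>\<alpha> v. scA (\<epsilon> h) x)" by (rule lin_sum[OF l, symmetric])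
    also have "\<dots> = \<pi> v" using a_counit by simp
    finally show ?thesis using range_fix[OF g v] by simp
  qed
  fix w
  show "tensor_eq scA scH (range \<pi>) UNIV (gm \<pi> (v + w)) (gm \<pi> v @ gm \<pi> w)"
    using te_push[OF a_add l, of "range \<pi>" v w] unfolding gm_def by simp
next
  have l: "lin scA \<pi>" using good_D(1)[OF g] .
  fix c v
  show "tensor_eq scA scH (range \<pi>) UNIV (gm \<pi> (scA c v)) (map (\<lambda>(x,h). (scA c x, h)) (gm \<pi> v))"
    using te_push[OF a_sc l, of "range \<pi>" c v] unfolding gm_def map_sc_apfst[OF l] by simp
next
  have l: "lin scA \<pi>" using good_D(1)[OF g] .
  fix v
  show "tensor3_eq scA scH scH (range \<pi>) UNIV UNIV
        (concat (map (\<lambda>(x,h). map (\<lambda>(h1,h2). (x, h1, h2)) (\<Delta> h)) (gm \<pi> v)))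
        (concat (map (\<lambda>(x,h). map (\<lambda>(x1,h1). (x1, h1, h)) (gm \<pi> x)) (gm \<pi> v)))"
    unfolding tensor3_eq_def
  proof safe
    fix \<phi> assume t: "trilin_on scA scH scH (range \<pi>) UNIV UNIV \<phi>"
    define \<phi>' where "\<phi>' a b d = \<phi> (\<pi> a) b d" for a b d
    have t': "trilin_on scA scH scH UNIV UNIV UNIV \<phi>'"
      using t l unfolding trilin_on_def \<phi>'_def lin_def by auto
    have inner: "(\<Sum>(a,b,d)\<leftarrow>map (\<lambda>(x1,h1). (x1, h1, h)) (gm \<pi> (\<pi> x)). \<phi> a b d)
       = (\<Sum>(a,b,d)\<leftarrow>map (\<lambda>(x1,h1). (x1, h1, h)) (\<alpha> x). \<phi>' a b d)" for x h
    proof -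
      have bl: "BL (\<lambda>a b. \<phi>' a b h)" using t' unfolding trilin_on_def bilin_on_def by auto
      have "(\<Sum>(a,b,d)\<leftarrow>map (\<lambda>(x1,h1). (x1, h1, h)) (gm \<pi> (\<pi> x)). \<phi> a b d)
          = (\<Sum>(a,b)\<leftarrow>\<alpha> (\<pi> x). \<phi>' a b h)"
        unfolding gm_def \<phi>'_def sum3_map_h sum_apfst ..
      also have "\<dots> = (\<Sum>(a,b)\<leftarrow>map (apfst \<pi>) (\<alpha> x). \<phi>' a b h)"
        using te_D[OF good_D(3)[OF g] bl] .
      also have "\<dots> = (\<Sum>(a,b,d)\<leftarrow>map (\<lambda>(x1,h1). (x1, h1, h)) (\<alpha> x). \<phi>' a b d)"
        unfolding sum_apfst \<phi>'_def sum3_map_h using good_D(2)[OF g] by simp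
      finally show ?thesis .
    qed
    have "(\<Sum>(a,b,d)\<leftarrow>concat (map (\<lambda>(x,h). map (\<lambda>(h1,h2). (x, h1, h2)) (\<Delta> h)) (gm \<pi> v)). \<phi> a b d)
      = (\<Sum>(a,b,d)\<leftarrow>concat (map (\<lambda>(x,h). map (\<lambda>(h1,h2). (x, h1, h2)) (\<Delta> h)) (\<alpha> v)). \<phi>' a b d)"
      unfolding sum3_concat gm_def \<phi>'_def by (simp add: comp_def case_prod_unfold)
    also have "\<dots> = (\<Sum>(a,b,d)\<leftarrow>concat (map (\<lambda>(x,h). map (\<lambda>(x1,h1). (x1, h1, h)) (\<alpha> x)) (\<alpha> v)). \<phi>' a b d)"
      using a_coass t' unfolding tensor3_eq_def by blast
    also have "\<dots> = (\<Sum>(a,b,d)\<leftarrow>concat (map (\<lambda>(x,h). map (\<lambda>(x1,h1). (x1, h1, h)) (gm \<pi> x)) (gm \<pi> v)). \<phi> a b d)"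
      unfolding sum3_concat using inner good_D(2)[OF g] unfolding gm_def
      by (simp add: comp_def case_prod_unfold)
    finally show "(\<Sum>(a,b,d)\<leftarrow>concat (map (\<lambda>(x,h). map (\<lambda>(h1,h2). (x, h1, h2)) (\<Delta> h)) (gm \<pi> v)). \<phi> a b d)
      = (\<Sum>(a,b,d)\<leftarrow>concat (map (\<lambda>(x,h). map (\<lambda>(x1,h1). (x1, h1, h)) (gm \<pi> x)) (gm \<pi> v)). \<phi> a b d)" .
  qed
qed

end

lemma map_apfst_tprod: "(\<And>p q. p \<in> set xs \<Longrightarrow> q \<in> set ys \<Longrightarrow> \<pi> (fst p * fst q) = fst p * fst q)
   \<Longrightarrow> map (apfst \<pi>) (tprod xs ys) = tprod xs ys"
  unfolding tprod_def by (induct xs) auto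

context L begin

lemma mult_gen:
  assumes g1: "good \<pi>1" and g2: "good \<pi>2" and g3: "good \<pi>3"
    and x: "x \<in> range \<pi>1" and y: "y \<in> range \<pi>2"
    and c: "\<And>a b. \<pi>3 (\<pi>1 a * \<pi>2 b) = \<pi>1 a * \<pi>2 b"
  shows "tensor_eq scA scH (range \<pi>3) UNIV (gm \<pi>3 (x * y)) (tprod (gm \<pi>1 x) (gm \<pi>2 y))"
proof -
  have "TE (\<alpha> (x * y)) (tprod (gm \<pi>1 x) (gm \<pi>2 y))"
  proof -
    have "TE (tprod (\<alpha> x) (\<alpha> y)) (tprod (gm \<pi>1 x) (\<alpha> y))"
      using te_tprod1[OF te_sym[OF gm_alpha[OF g1 x]] alg algH] .
    moreover have "TE (tprod (gm \<pi>1 x) (\<alpha> y)) (tprod (gm \<pi>1 x) (gm \<pi>2 y))"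
      using te_tprod2[OF te_sym[OF gm_alpha[OF g2 y]] alg algH] .
    ultimately show ?thesis using a_mult te_trans by metis
  qed
  from te_push[OF this good_D(1)[OF g3], of "range \<pi>3"]
  have "tensor_eq scA scH (range \<pi>3) UNIV (gm \<pi>3 (x*y)) (map (apfst \<pi>3) (tprod (gm \<pi>1 x) (gm \<pi>2 y)))"
    unfolding gm_def by simp
  moreover have "map (apfst \<pi>3) (tprod (gm \<pi>1 x) (gm \<pi>2 y)) = tprod (gm \<pi>1 x) (gm \<pi>2 y)"
    by (rule map_apfst_tprod) (auto simp: gm_def c)
  ultimately show ?thesis by simp
qed

definition Lp :: "nat \<Rightarrow> 'a \<Rightarrow> 'a" where "Lp i = (if i = 1 then Pm else id)"
definition Rp :: "nat \<Rightarrow> 'a \<Rightarrow> 'a" where "Rp j = (if j = 1 then Qm else id)"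
definition pij :: "nat \<Rightarrow> nat \<Rightarrow> 'a \<Rightarrow> 'a" where "pij i j a = Lp i (Rp j a)"

lemma Lp_mult: "Lp i (a * b) = Lp i a * b" unfolding Lp_def by (simp add: P_mult)
lemma Rp_mult: "Rp j (a * b) = a * Rp j b" unfolding Rp_def by (simp add: Q_mult)
lemma LR_comm: "Lp i (Rp j a) = Rp j (Lp i a)" unfolding Lp_def Rp_def by (simp add: PQ_comm)
lemma Lp_idem[simp]: "Lp i (Lp i a) = Lp i a" unfolding Lp_def by simp
lemma Rp_idem[simp]: "Rp j (Rp j a) = Rp j a" unfolding Rp_def by simp

lemma pij_iff: "x \<in> range (pij i j) \<longleftrightarrow> Lp i x = x \<and> Rp j x = x"
proof
  assume "x \<in> range (pij i j)"
  then obtain a where a: "x = Lp i (Rp j a)" unfolding pij_def by auto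
  have "Rp j x = Lp i (Rp j (Rp j a))" unfolding a by (rule LR_comm[symmetric])
  then have "Rp j x = x" using a by simp
  then show "Lp i x = x \<and> Rp j x = x" using a by simp
next
  assume "Lp i x = x \<and> Rp j x = x"
  then have "x = pij i j x" unfolding pij_def by simp
  then show "x \<in> range (pij i j)" by (metis rangeI)
qed

lemma pij_11: "pij 1 1 = Em" unfolding pij_def Lp_def Rp_def Em_def by auto
lemma pij_12: "pij 1 2 = Pm" unfolding pij_def Lp_def Rp_def by auto
lemma pij_21: "pij 2 1 = Qm" unfolding pij_def Lp_def Rp_def by auto
lemma pij_22: "pij 2 2 = id" unfolding pij_def Lp_def Rp_def by auto

lemma good_pij: "i \<in> {1,2} \<Longrightarrow> j \<in> {1,2} \<Longrightarrow> good (pij i j)"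
  using good_E good_P good_Q good_id pij_11 pij_12 pij_21 pij_22 by auto

lemma pij_mult: "x \<in> range (pij i j) \<Longrightarrow> y \<in> range (pij j l) \<Longrightarrow> x * y \<in> range (pij i l)"
proof -
  assume "x \<in> range (pij i j)" "y \<in> range (pij j l)"
  then have "Lp i x = x" "Rp l y = y" unfolding pij_iff by auto
  then have "Lp i (x * y) = x * y" "Rp l (x * y) = x * y" by (simp_all only: Lp_mult Rp_mult)
  then show ?thesis unfolding pij_iff by blast
qed

lemma pij_mult2: "pij i l (pij i j a * pij j l b) = pij i j a * pij j l b"
proof -
  have "pij i j a * pij j l b \<in> range (pij i l)" by (rule pij_mult) auto
  then show ?thesis unfolding pij_iff unfolding pij_def by simp
qed

lemma mult_pij: "i \<in> {1,2} \<Longrightarrow> j \<in> {1,2} \<Longrightarrow> l \<in> {1,2} \<Longrightarrow> x \<in> range (pij i j) \<Longrightarrow> y \<in> range (pij j l)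
  \<Longrightarrow> tensor_eq scA scH (range (pij i l)) UNIV (gm (pij i l) (x * y)) (tprod (gm (pij i j) x) (gm (pij j l) y))"
  by (rule mult_gen[OF good_pij good_pij good_pij]) (auto simp: pij_mult2)

lemma B_mult: "x \<in> range Em \<Longrightarrow> y \<in> range Em \<Longrightarrow> x * y \<in> range Em"
  using pij_mult[of x 1 1 y 1] pij_11 by simp

lemma B_mult_te: "x \<in> range Em \<Longrightarrow> y \<in> range Em \<Longrightarrow>
  tensor_eq scA scH (range Em) UNIV (gm Em (x * y)) (tprod (gm Em x) (gm Em y))"
  using mult_pij[of 1 1 1 x y] pij_11 by simp

end

lemma bil_0l: "bilin_on sv sw V W \<phi> \<Longrightarrow> 0 \<in> V \<Longrightarrow> y \<in> W \<Longrightarrow> \<phi> 0 y = 0"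
  unfolding bilin_on_def by (metis add_cancel_right_right add_0)
lemma bil_0r: "bilin_on sv sw V W \<phi> \<Longrightarrow> 0 \<in> W \<Longrightarrow> x \<in> V \<Longrightarrow> \<phi> x 0 = 0"
  unfolding bilin_on_def by (metis add_cancel_right_right add_0)

lemma lsub_sum: "lsubspace sc V \<Longrightarrow> (\<forall>(r,s)\<in>set ks. f r s \<in> V) \<Longrightarrow> (\<Sum>(r,s)\<leftarrow>ks. f r s) \<in> V"
  unfolding lsubspace_def by (induct ks) auto

lemma bil_suml: assumes "bilin_on sv sw V W \<phi>" "lsubspace sv V" "\<forall>(r,s)\<in>set ks. f r s \<in> V" "y \<in> W"
  shows "\<phi> (\<Sum>(r,s)\<leftarrow>ks. f r s) y = (\<Sum>(r,s)\<leftarrow>ks. \<phi> (f r s) y)"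
  using assms(3)
proof (induct ks)
  case Nil then show ?case using bil_0l[OF assms(1) _ assms(4)] assms(2) unfolding lsubspace_def by simp
next
  case (Cons p ks)
  obtain r s where p: "p = (r,s)" by fastforce
  have "(\<Sum>(r,s)\<leftarrow>ks. f r s) \<in> V" using lsub_sum[OF assms(2)] Cons(2) by auto
  then show ?case using Cons assms(1,4) p unfolding bilin_on_def by auto
qed

lemma bil_sumr: assumes "bilin_on sv sw V W \<phi>" "lsubspace sw W" "\<forall>(r,s)\<in>set ks. f r s \<in> W" "x \<in> V"
  shows "\<phi> x (\<Sum>(r,s)\<leftarrow>ks. f r s) = (\<Sum>(r,s)\<leftarrow>ks. \<phi> x (f r s))"
  using assms(3)
proof (induct ks)
  case Nil then show ?case using bil_0r[OF assms(1) _ assms(4)] assms(2) unfolding lsubspace_def by simp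
next
  case (Cons p ks)
  obtain r s where p: "p = (r,s)" by fastforce
  have "(\<Sum>(r,s)\<leftarrow>ks. f r s) \<in> W" using lsub_sum[OF assms(2)] Cons(2) by auto
  then show ?case using Cons assms(1,4) p unfolding bilin_on_def by auto
qed

lemma sum_mult_left2: "a * (\<Sum>(r,s)\<leftarrow>ks. f r s) = (\<Sum>(r,s)\<leftarrow>ks. a * (f r s::'a::ring))"
  by (induct ks) (auto simp: distrib_left)
lemma sum_mult_right2: "(\<Sum>(r,s)\<leftarrow>ks. f r s) * a = (\<Sum>(r,s)\<leftarrow>ks. (f r s::'a::ring) * a)"
  by (induct ks) (auto simp: distrib_right)

context L begin

abbreviation "Bs \<equiv> range Em"

lemma lsubB: "lsubspace scA Bs" by (rule lsub_range[OF E_lin])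

lemma E_in[simp]: "Em a \<in> Bs" by simp

lemma E_sum: "Em (\<Sum>(r,s)\<leftarrow>ks. f r s) = (\<Sum>(r,s)\<leftarrow>ks. Em (f r s))"
  by (rule lin_sum[OF E_lin])

lemma EER: "Em a * Em b = Em (a * pl s * c)" if "b = s * c" "s \<in> Rc"
  using E_mult P_mult P_R that by (simp add: mult.assoc)

lemma Rc_mult3: "a \<in> Rc \<Longrightarrow> b \<in> Rc \<Longrightarrow> c \<in> Rc \<Longrightarrow> a * b * c \<in> Rc" using Rc_mult by blast

definition isdec where "isdec e ks \<longleftrightarrow> set ks \<subseteq> Rc \<times> Rc \<and> e = (\<Sum>(r,s)\<leftarrow>ks. r * pl s)"

lemma isdec_ex: "e \<in> Rc \<Longrightarrow> \<exists>ks. isdec e ks" unfolding isdec_def using DEC by blast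

lemma E_coinv: "r \<in> Rc \<Longrightarrow> Em r \<in> coinv scA scH Bs (gm Em)"
proof -
  assume r: "r \<in> Rc"
  have "TE (\<alpha> (Em r)) (map (apfst Em) [(r,1)])"
    using te_trans[OF good_D(3)[OF good_E] te_lin[OF iffD1[OF Rc_iff r] E_lin]] .
  from te_push[OF this E_lin, of Bs]
  show ?thesis unfolding coinv_def gm_def by simp
qed

end

context L begin

lemma m_sum: assumes "\<And>x y. m (x*y) = m x * y" "\<And>x y. m (x+y) = m x + m y" "m 0 = 0"
  shows "m (\<Sum>(r,s)\<leftarrow>ks. r * pl s) = (\<Sum>(r,s)\<leftarrow>ks. m r * pl s)"
  by (induct ks) (auto simp: assms)

lemma KEY:
  assumes bil: "bilin_on scA scA Bs Bs \<phi>"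
    and bal: "\<And>a r b. r \<in> Rc \<Longrightarrow> \<phi> (Em a * Em r) (Em b) = \<phi> (Em a) (Em r * Em b)"
    and ks: "isdec e ks" and gs: "isdec g gs"
    and m1: "\<And>r. r \<in> Rc \<Longrightarrow> m r \<in> Rc" and m2: "\<And>x y. m (x*y) = m x * y"
    and m3: "\<And>x y. m (x+y) = m x + m y" and m4: "m 0 = 0"
  shows "(\<Sum>(r,s)\<leftarrow>ks. \<phi> (Em (a*g*m r)) (Em (s*c))) = (\<Sum>(u,v)\<leftarrow>gs. \<phi> (Em (a*u)) (Em (v * m e * c)))"
proof -
  have ksR: "\<forall>(r,s)\<in>set ks. r \<in> Rc \<and> s \<in> Rc" using ks unfolding isdec_def by auto
  have gsR: "\<forall>(u,v)\<in>set gs. u \<in> Rc \<and> v \<in> Rc" using gs unfolding isdec_def by auto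
  have step1: "\<phi> (Em (a*g*m r)) (Em (s*c)) = (\<Sum>(u,v)\<leftarrow>gs. \<phi> (Em (a*u)) (Em (v * m r * pl s * c)))"
    if rs: "r \<in> Rc" "s \<in> Rc" for r s
  proof -
    have eq: "a*g*m r = (\<Sum>(u,v)\<leftarrow>gs. a * u * pl v * m r)"
      using gs unfolding isdec_def by (simp add: sum_mult_left2 sum_mult_right2 mult.assoc)
    have "Em (a*g*m r) = (\<Sum>(u,v)\<leftarrow>gs. Em (a * u * pl v * m r))"
      unfolding eq by (rule E_sum)
    also have "\<dots> = (\<Sum>(u,v)\<leftarrow>gs. Em (a * u) * Em (v * m r))"
      using EER[OF refl] gsR by (auto intro!: arg_cong[where f=sum_list] map_cong simp: mult.assoc)
    finally have "Em (a*g*m r) = (\<Sum>(u,v)\<leftarrow>gs. Em (a * u) * Em (v * m r))" .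
    then have "\<phi> (Em (a*g*m r)) (Em (s*c)) = (\<Sum>(u,v)\<leftarrow>gs. \<phi> (Em (a * u) * Em (v * m r)) (Em (s*c)))"
      using bil_suml[OF bil lsubB, of gs "\<lambda>u v. Em (a * u) * Em (v * m r)" "Em (s*c)"] B_mult by auto
    also have "\<dots> = (\<Sum>(u,v)\<leftarrow>gs. \<phi> (Em (a * u)) (Em (v * m r) * Em (s*c)))"
      using gsR bal Rc_mult m1[OF rs(1)] by (auto intro!: arg_cong[where f=sum_list] map_cong)
    also have "\<dots> = (\<Sum>(u,v)\<leftarrow>gs. \<phi> (Em (a * u)) (Em (v * m r * pl s * c)))"
      using EER[OF refl rs(2)] by (simp add: mult.assoc)
    finally show ?thesis .
  qed
  have "(\<Sum>(r,s)\<leftarrow>ks. \<phi> (Em (a*g*m r)) (Em (s*c)))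
      = (\<Sum>(r,s)\<leftarrow>ks. \<Sum>(u,v)\<leftarrow>gs. \<phi> (Em (a*u)) (Em (v * m r * pl s * c)))"
    using step1 ksR by (auto intro!: arg_cong[where f=sum_list] map_cong)
  also have "\<dots> = (\<Sum>(u,v)\<leftarrow>gs. \<Sum>(r,s)\<leftarrow>ks. \<phi> (Em (a*u)) (Em (v * m r * pl s * c)))"
    by (rule sum_swap2)
  also have "\<dots> = (\<Sum>(u,v)\<leftarrow>gs. \<phi> (Em (a*u)) (\<Sum>(r,s)\<leftarrow>ks. Em (v * m r * pl s * c)))"
    using bil_sumr[OF bil lsubB, of ks] by auto
  also have "\<dots> = (\<Sum>(u,v)\<leftarrow>gs. \<phi> (Em (a*u)) (Em (v * m e * c)))"
  proof -
    have "v * m e * c = (\<Sum>(r,s)\<leftarrow>ks. v * m r * pl s * c)" for v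
      using ks m_sum[OF m2 m3 m4, of ks] unfolding isdec_def
      by (simp add: sum_mult_left2 sum_mult_right2 mult.assoc)
    then show ?thesis by (simp add: E_sum)
  qed
  finally show ?thesis .
qed

end

lemma sum_galois: "(\<Sum>(a,b)\<leftarrow>galois_map \<gamma> xs. \<phi> a b) = (\<Sum>(a,b)\<leftarrow>xs. \<Sum>(c,h)\<leftarrow>\<gamma> b. \<phi> (a*c) h)"
  unfolding galois_map_def by (induct xs) (auto simp: case_prod_unfold o_def)

lemma sum_cong2: "(\<And>a b. (a,b) \<in> set xs \<Longrightarrow> f a b = g a b) \<Longrightarrow> (\<Sum>(a,b)\<leftarrow>xs. f a b) = (\<Sum>(a,b)\<leftarrow>xs. g a b)"
  by (induct xs) auto

context L begin

lemma galois_cong: "(\<And>a b. (a,b) \<in> set xs \<Longrightarrow> TE (\<gamma> b) (\<gamma>' b)) \<Longrightarrow> TE (galois_map \<gamma> xs) (galois_map \<gamma>' xs)"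
  unfolding tensor_eq_def sum_galois
proof safe
  fix \<phi> assume h: "\<And>a b. (a,b) \<in> set xs \<Longrightarrow> \<forall>\<phi>. BL \<phi> \<longrightarrow> (\<Sum>(a,b)\<leftarrow>\<gamma> b. \<phi> a b) = (\<Sum>(a,b)\<leftarrow>\<gamma>' b. \<phi> a b)"
    and b: "BL \<phi>"
  have bl: "BL (\<lambda>c h. \<phi> (a*c) h)" for a using b unfolding bilin_on_def by (simp add: distrib_left)
  show "(\<Sum>(a,b)\<leftarrow>xs. \<Sum>(c,h)\<leftarrow>\<gamma> b. \<phi> (a*c) h) = (\<Sum>(a,b)\<leftarrow>xs. \<Sum>(c,h)\<leftarrow>\<gamma>' b. \<phi> (a*c) h)"
  proof (rule sum_cong2)
    fix a b assume "(a,b) \<in> set xs"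
    from h[OF this, rule_format, OF bl[of a]]
    show "(\<Sum>(c,h)\<leftarrow>\<gamma> b. \<phi> (a*c) h) = (\<Sum>(c,h)\<leftarrow>\<gamma>' b. \<phi> (a*c) h)" by simp
  qed
qed

definition Psi where "Psi \<phi> a c ks = (\<Sum>(r,s)\<leftarrow>ks. \<phi> (Em (a*r)) (Em (s*c)))"
definition e0 where "e0 a c = (SOME e. e \<in> Rc \<and> a * e = a \<and> e * c = c)"
definition dk where "dk e = (SOME ks. isdec e ks)"
definition psi where "psi \<phi> a c = Psi \<phi> a c (dk (e0 a c))"

lemma e0_prop: "e0 a c \<in> Rc \<and> a * e0 a c = a \<and> e0 a c * c = c"
proof -
  have "\<exists>e. e \<in> Rc \<and> a * e = a \<and> e * c = c" using units[of "{a,c}"] by auto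
  from someI_ex[OF this] show ?thesis unfolding e0_def .
qed
lemma dk_prop: "e \<in> Rc \<Longrightarrow> isdec e (dk e)"
  unfolding dk_def using isdec_ex someI_ex by metis

context
  fixes \<phi>
  assumes bil: "bilin_on scA scA Bs Bs \<phi>"
    and bal: "\<And>a r b. r \<in> Rc \<Longrightarrow> \<phi> (Em a * Em r) (Em b) = \<phi> (Em a) (Em r * Em b)"
begin

lemma KEY0: "isdec e ks \<Longrightarrow> isdec g gs \<Longrightarrow>
   (\<Sum>(r,s)\<leftarrow>ks. \<phi> (Em (a*g*r)) (Em (s*c))) = (\<Sum>(u,v)\<leftarrow>gs. \<phi> (Em (a*u)) (Em (v * e * c)))"
  using KEY[OF bil bal, of e ks g gs id a c] by simp

lemma KEYr: "r \<in> Rc \<Longrightarrow> isdec e ks \<Longrightarrow> isdec g gs \<Longrightarrow>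
   (\<Sum>(x,s)\<leftarrow>ks. \<phi> (Em (a*g*(r*x))) (Em (s*c))) = (\<Sum>(u,v)\<leftarrow>gs. \<phi> (Em (a*u)) (Em (v * (r*e) * c)))"
  using KEY[OF bil bal, of e ks g gs "\<lambda>x. r*x" a c] Rc_mult by (simp add: distrib_left mult.assoc)

lemma psi_r: "e \<in> Rc \<Longrightarrow> a * e = a \<Longrightarrow> isdec e ks \<Longrightarrow> psi \<phi> a c = Psi \<phi> a c ks"
proof -
  assume e: "e \<in> Rc" "a * e = a" "isdec e ks"
  let ?e = "e0 a c"
  have p: "?e \<in> Rc" "a * ?e = a" "?e * c = c" using e0_prop by auto
  have d: "isdec ?e (dk ?e)" using dk_prop p(1) .
  from KEY0[OF d e(3), of a c] show ?thesis
    unfolding psi_def Psi_def using e(2) p(3) by (simp add: mult.assoc)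
qed

lemma psi_l: "e \<in> Rc \<Longrightarrow> e * c = c \<Longrightarrow> isdec e ks \<Longrightarrow> psi \<phi> a c = Psi \<phi> a c ks"
proof -
  assume e: "e \<in> Rc" "e * c = c" "isdec e ks"
  let ?e = "e0 a c"
  have p: "?e \<in> Rc" "a * ?e = a" "?e * c = c" using e0_prop by auto
  have d: "isdec ?e (dk ?e)" using dk_prop p(1) .
  from KEY0[OF e(3) d, of a c] show ?thesis
    unfolding psi_def Psi_def using e(2) p(2) by (simp add: mult.assoc)
qed

lemma Elin_simps: "Em (x + y) = Em x + Em y" "Em (scA k x) = scA k (Em x)"
  using E_lin unfolding lin_def by auto

lemma psi_bil: "bilin_on scA scA UNIV UNIV (psi \<phi>)"
  unfolding bilin_on_def
proof (intro conjI ballI allI)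
  fix a a' c :: 'a
  obtain e where e: "e \<in> Rc" "a * e = a" "a' * e = a'" "(a + a') * e = a + a'" using units[of "{a,a',a+a'}"] by auto
  obtain ks where ks: "isdec e ks" using dk_prop e(1) by blast
  show "psi \<phi> (a + a') c = psi \<phi> a c + psi \<phi> a' c"
    unfolding psi_r[OF e(1,2) ks] psi_r[OF e(1,3) ks] psi_r[OF e(1,4) ks] Psi_def
    using bil unfolding bilin_on_def by (simp add: distrib_right Elin_simps sum_list_addf2)
next
  fix a c c' :: 'a
  obtain e where e: "e \<in> Rc" "e * c = c" "e * c' = c'" "e * (c + c') = c + c'" using units[of "{c,c',c+c'}"] by auto
  obtain ks where ks: "isdec e ks" using dk_prop e(1) by blast
  show "psi \<phi> a (c + c') = psi \<phi> a c + psi \<phi> a c'"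
    unfolding psi_l[OF e(1,2) ks] psi_l[OF e(1,3) ks] psi_l[OF e(1,4) ks] Psi_def
    using bil unfolding bilin_on_def by (simp add: distrib_left Elin_simps sum_list_addf2)
next
  fix k and a c :: 'a
  obtain e where e: "e \<in> Rc" "a * e = a" "scA k a * e = scA k a" "e * c = c" "e * scA k c = scA k c"
    using units[of "{a,c,scA k a, scA k c}"] by auto
  obtain ks where ks: "isdec e ks" using dk_prop e(1) by blast
  show "psi \<phi> (scA k a) c = k * psi \<phi> a c"
    unfolding psi_r[OF e(1,2) ks] psi_r[OF e(1,3) ks] Psi_def
    using bil unfolding bilin_on_def by (simp add: Elin_simps sum_list_cmult2)
next
  fix k and a c :: 'a
  obtain e where e: "e \<in> Rc" "e * c = c" "e * scA k c = scA k c"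
    using units[of "{c, scA k c}"] by auto
  obtain ks where ks: "isdec e ks" using dk_prop e(1) by blast
  show "psi \<phi> a (scA k c) = k * psi \<phi> a c"
    unfolding psi_l[OF e(1,2) ks] psi_l[OF e(1,3) ks] Psi_def
    using bil unfolding bilin_on_def by (simp add: Elin_simps sum_list_cmult2)
qed

lemma psi_bal: "r \<in> Rc \<Longrightarrow> psi \<phi> (a * r) c = psi \<phi> a (r * c)"
proof -
  assume r: "r \<in> Rc"
  obtain e where e: "e \<in> Rc" "e * c = c" using unit1 by blast
  obtain g where g: "g \<in> Rc" "a * g = a" using unit1 by blast
  obtain ks where ks: "isdec e ks" using dk_prop e(1) by blast
  obtain gs where gs: "isdec g gs" using dk_prop g(1) by blast
  from KEYr[OF r ks gs, of a c]
  show ?thesis unfolding psi_l[OF e ks] psi_r[OF g(1,2) gs] Psi_def using e(2) g(2)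
    by (simp add: mult.assoc)
qed

lemma psi_B: "x \<in> Bs \<Longrightarrow> y \<in> Bs \<Longrightarrow> psi \<phi> x y = \<phi> x y"
proof -
  assume x: "x \<in> Bs" and y: "y \<in> Bs"
  obtain e where e: "e \<in> Rc" "x * e = x" "e * y = y" using units[of "{x,y}"] by auto
  obtain ks where ks: "isdec e ks" using dk_prop e(1) by blast
  have ksR: "\<forall>(r,s)\<in>set ks. r \<in> Rc \<and> s \<in> Rc" using ks unfolding isdec_def by auto
  have xE: "Em x = x" using x by auto
  have xP: "Pm x = x" "Qm x = x" using x by auto
  have E1: "Em (x * r) = Em x * Em r" for r
  proof -
    have "Em (x * r) = x * Qm r" unfolding Em_def by (simp add: Q_mult P_mult xP)
    moreover have "Em x * Em r = x * Qm r" unfolding xE unfolding Em_def by (simp add: PQ5 xP)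
    ultimately show ?thesis by simp
  qed
  have "psi \<phi> x y = (\<Sum>(r,s)\<leftarrow>ks. \<phi> (Em x * Em r) (Em (s*y)))"
    unfolding psi_r[OF e(1,2) ks] Psi_def E1 ..
  also have "\<dots> = (\<Sum>(r,s)\<leftarrow>ks. \<phi> (Em x) (Em (r * pl s * y)))"
    using ksR bal EER[OF refl] by (intro sum_cong2) auto
  also have "\<dots> = \<phi> (Em x) (\<Sum>(r,s)\<leftarrow>ks. Em (r * pl s * y))"
    using bil_sumr[OF bil lsubB, of ks] by auto
  also have "\<dots> = \<phi> x (Em (e * y))"
    using ks xE unfolding isdec_def E_sum[symmetric] by (simp add: sum_mult_right2)
  finally show ?thesis using e(3) y by auto
qed

end

lemma B_inj:
  assumes xs: "xs \<in> lists (Bs \<times> Bs)" and ys: "ys \<in> lists (Bs \<times> Bs)"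
    and t: "tensor_eq scA scH Bs UNIV (galois_map (gm Em) xs) (galois_map (gm Em) ys)"
  shows "btensor_eq scA Bs Bs (coinv scA scH Bs (gm Em)) xs ys"
  unfolding btensor_eq_def
proof safe
  fix \<phi> assume bil: "bilin_on scA scA Bs Bs \<phi>"
    and b0: "\<forall>a\<in>Bs. \<forall>r\<in>coinv scA scH Bs (gm Em). \<forall>b\<in>Bs. \<phi> (a * r) b = \<phi> a (r * b)"
  have bal: "\<And>a r b. r \<in> Rc \<Longrightarrow> \<phi> (Em a * Em r) (Em b) = \<phi> (Em a) (Em r * Em b)"
    using b0 E_coinv by blast
  have g1: "TE (galois_map \<alpha> xs) (galois_map (gm Em) xs)"
    by (rule galois_cong) (use xs gm_alpha[OF good_E] te_sym in fastforce)
  have g2: "TE (galois_map (gm Em) ys) (galois_map \<alpha> ys)"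
    by (rule galois_cong) (use ys gm_alpha[OF good_E] in fastforce)
  have "TE (galois_map \<alpha> xs) (galois_map \<alpha> ys)"
    using te_trans[OF g1 te_trans[OF te_mono[OF t] g2]] by simp
  then have bt: "btensor_eq scA UNIV UNIV Rc xs ys" by (rule a_inj)
  have "(\<Sum>(a,b)\<leftarrow>xs. psi \<phi> a b) = (\<Sum>(a,b)\<leftarrow>ys. psi \<phi> a b)"
    using bt psi_bil[OF bil bal] psi_bal[OF bil bal] unfolding btensor_eq_def by blast
  moreover have "(\<Sum>(a,b)\<leftarrow>xs. psi \<phi> a b) = (\<Sum>(a,b)\<leftarrow>xs. \<phi> a b)"
    using xs psi_B[OF bil bal] by (intro sum_cong2) auto
  moreover have "(\<Sum>(a,b)\<leftarrow>ys. psi \<phi> a b) = (\<Sum>(a,b)\<leftarrow>ys. \<phi> a b)"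
    using ys psi_B[OF bil bal] by (intro sum_cong2) auto
  ultimately show "(\<Sum>(a,b)\<leftarrow>xs. \<phi> a b) = (\<Sum>(a,b)\<leftarrow>ys. \<phi> a b)" by simp
qed

end

lemma sum_concat2: "(\<Sum>(a,b)\<leftarrow>concat (map f xs). \<phi> a b) = (\<Sum>p\<leftarrow>xs. \<Sum>(a,b)\<leftarrow>f p. \<phi> a b)"
  by (induct xs) auto

context L begin

lemma B_surj: assumes zs: "zs \<in> lists (Bs \<times> (UNIV::'h set))"
  shows "\<exists>xs\<in>lists (Bs \<times> Bs). tensor_eq scA scH Bs UNIV (galois_map (gm Em) xs) zs"
proof -
  obtain xs0 where x0: "TE (galois_map \<alpha> xs0) zs" using a_surj by blast
  obtain e where e: "e \<in> Rc" "\<forall>x\<in>fst ` set xs0. x * e = x" using units[of "fst ` set xs0"] by auto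
  obtain ks where ks: "isdec e ks" using dk_prop e(1) by blast
  have ksR: "\<forall>(r,s)\<in>set ks. r \<in> Rc \<and> s \<in> Rc" using ks unfolding isdec_def by auto
  define xs where "xs = concat (map (\<lambda>(x,y). map (\<lambda>(r,s). (Em (x*r), Em (s*y))) ks) xs0)"
  have xsB: "xs \<in> lists (Bs \<times> Bs)" unfolding xs_def by auto
  have "tensor_eq scA scH Bs UNIV (galois_map (gm Em) xs) zs"
    unfolding tensor_eq_def
  proof safe
    fix \<phi> assume bil: "bilin_on scA scH Bs UNIV \<phi>"
    define \<phi>' where "\<phi>' a h = \<phi> (Em a) h" for a h
    have bl': "BL \<phi>'" using bil E_lin unfolding bilin_on_def \<phi>'_def lin_def by auto
    have inner: "(\<Sum>(c,h)\<leftarrow>gm Em (Em (s*y)). \<phi> (Em (x*r) * c) h) = (\<Sum>(c,h)\<leftarrow>\<alpha> y. \<phi> (Em (x*r*pl s*c)) h)"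
      if s: "s \<in> Rc" for x y r s
    proof -
      define \<chi> where "\<chi> c h = \<phi> (Em (x*r) * Em c) h" for c h
      have "BL (\<lambda>c h. \<phi> (Em (x*r*Pm c)) h)"
        using bil E_lin P_lin unfolding bilin_on_def lin_def by (auto simp: distrib_left)
      then have bx: "BL \<chi>" unfolding \<chi>_def E_mult .
      have t1: "TE (\<alpha> (Em (s*y))) (map (apfst Em) (map (apfst (\<lambda>x. s*x)) (\<alpha> y)))"
        using te_trans[OF good_D(3)[OF good_E] te_lin[OF alpha_Rl[OF s] E_lin]] .
      have "(\<Sum>(c,h)\<leftarrow>gm Em (Em (s*y)). \<phi> (Em (x*r) * c) h) = (\<Sum>(c,h)\<leftarrow>\<alpha> (Em (s*y)). \<chi> c h)"
        unfolding gm_def sum_apfst \<chi>_def ..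
      also have "\<dots> = (\<Sum>(c,h)\<leftarrow>map (apfst Em) (map (apfst (\<lambda>x. s*x)) (\<alpha> y)). \<chi> c h)"
        using te_D[OF t1 bx] .
      also have "\<dots> = (\<Sum>(c,h)\<leftarrow>\<alpha> y. \<phi> (Em (x*r*pl s*c)) h)"
        unfolding sum_apfst \<chi>_def using EER[OF refl s] by (simp add: mult.assoc)
      finally show ?thesis .
    qed
    have main: "(\<Sum>(r,s)\<leftarrow>ks. \<Sum>(c,h)\<leftarrow>gm Em (Em (s*y)). \<phi> (Em (x*r) * c) h) = (\<Sum>(c,h)\<leftarrow>\<alpha> y. \<phi> (Em (x*c)) h)"
      if x: "x * e = x" for x y
    proof -
      have "(\<Sum>(r,s)\<leftarrow>ks. \<Sum>(c,h)\<leftarrow>gm Em (Em (s*y)). \<phi> (Em (x*r) * c) h)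
          = (\<Sum>(r,s)\<leftarrow>ks. \<Sum>(c,h)\<leftarrow>\<alpha> y. \<phi> (Em (x*r*pl s*c)) h)"
        using ksR inner by (intro sum_cong2) auto
      also have "\<dots> = (\<Sum>(c,h)\<leftarrow>\<alpha> y. \<Sum>(r,s)\<leftarrow>ks. \<phi> (Em (x*r*pl s*c)) h)" by (rule sum_swap2)
      also have "\<dots> = (\<Sum>(c,h)\<leftarrow>\<alpha> y. \<phi> (\<Sum>(r,s)\<leftarrow>ks. Em (x*r*pl s*c)) h)"
        using bil_suml[OF bil lsubB, of ks] by auto
      also have "\<dots> = (\<Sum>(c,h)\<leftarrow>\<alpha> y. \<phi> (Em (x*e*c)) h)"
        using ks unfolding isdec_def E_sum[symmetric]
        by (simp add: sum_mult_left2 sum_mult_right2 mult.assoc)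
      finally show ?thesis using x by simp
    qed
    have "(\<Sum>(a,b)\<leftarrow>galois_map (gm Em) xs. \<phi> a b)
        = (\<Sum>(x,y)\<leftarrow>xs0. \<Sum>(r,s)\<leftarrow>ks. \<Sum>(c,h)\<leftarrow>gm Em (Em (s*y)). \<phi> (Em (x*r) * c) h)"
      unfolding sum_galois xs_def sum_concat2 by (simp add: case_prod_unfold o_def)
    also have "\<dots> = (\<Sum>(x,y)\<leftarrow>xs0. \<Sum>(c,h)\<leftarrow>\<alpha> y. \<phi> (Em (x*c)) h)"
      using main e(2) by (intro sum_cong2) force
    also have "\<dots> = (\<Sum>(a,b)\<leftarrow>galois_map \<alpha> xs0. \<phi>' a b)"
      unfolding sum_galois \<phi>'_def ..
    also have "\<dots> = (\<Sum>(a,b)\<leftarrow>zs. \<phi>' a b)" using te_D[OF x0 bl'] .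
    also have "\<dots> = (\<Sum>(a,b)\<leftarrow>zs. \<phi> a b)"
      unfolding \<phi>'_def using zs by (intro sum_cong2) auto
    finally show "(\<Sum>(a,b)\<leftarrow>galois_map (gm Em) xs. \<phi> a b) = (\<Sum>(a,b)\<leftarrow>zs. \<phi> a b)" .
  qed
  then show ?thesis using xsB by blast
qed

lemma B_galois: "galois_coaction scA scH \<Delta> \<epsilon> Bs (gm Em)"
  unfolding galois_coaction_def comodule_algebra_on_def
  using comod_gen[OF good_E] B_mult B_mult_te B_inj B_surj by blast

end

context L begin

abbreviation "Sp i j \<equiv> range (pij i j)"

lemma Sp_D: "x \<in> Sp i j \<Longrightarrow> Lp i x = x" "x \<in> Sp i j \<Longrightarrow> Rp j x = x"
  using pij_iff by blast+
lemma Sp_I: "Lp i x = x \<Longrightarrow> Rp j x = x \<Longrightarrow> x \<in> Sp i j"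
  using pij_iff by blast

lemma Lp2[simp]: "Lp 2 = id" unfolding Lp_def by simp
lemma Rp2[simp]: "Rp 2 = id" unfolding Rp_def by simp
lemma Lp1[simp]: "Lp 1 = Pm" unfolding Lp_def by simp
lemma Rp1[simp]: "Rp 1 = Qm" unfolding Rp_def by simp
lemma Lp1'[simp]: "Lp (Suc 0) = Pm" unfolding Lp_def by simp
lemma Rp1'[simp]: "Rp (Suc 0) = Qm" unfolding Rp_def by simp

lemma lsubSp: "i \<in> {1,2} \<Longrightarrow> j \<in> {1,2} \<Longrightarrow> lsubspace scA (Sp i j)"
  using lsub_range good_D(1)[OF good_pij] by blast

lemma Lp_lin: "lin scA (Lp i)" unfolding Lp_def using P_lin lin_id by auto
lemma Rp_lin: "lin scA (Rp j)" unfolding Rp_def using Q_lin lin_id by auto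

lemma Lp_sum: "Lp i (\<Sum>(r,s)\<leftarrow>ks. f r s) = (\<Sum>(r,s)\<leftarrow>ks. Lp i (f r s))" by (rule lin_sum[OF Lp_lin])

lemma sum_prod_Sp: "i \<in> {1,2} \<Longrightarrow> l \<in> {1,2} \<Longrightarrow> xs \<in> lists (Sp i j \<times> Sp j l) \<Longrightarrow> (\<Sum>(x,y)\<leftarrow>xs. x * y) \<in> Sp i l"
proof -
  assume a: "i \<in> {1,2}" "l \<in> {1,2}" "xs \<in> lists (Sp i j \<times> Sp j l)"
  have "\<forall>(x,y)\<in>set xs. x * y \<in> Sp i l"
  proof
    fix p assume "p \<in> set xs"
    then have "fst p \<in> Sp i j" "snd p \<in> Sp j l" using a(3) by auto
    then have "fst p * snd p \<in> Sp i l" by (rule pij_mult)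
    then show "case p of (x,y) \<Rightarrow> x * y \<in> Sp i l" by (simp add: case_prod_unfold)
  qed
  then show ?thesis by (rule lsub_sum[OF lsubSp[OF a(1,2)]])
qed

lemma strict_surj:
  assumes ij: "i \<in> {1,2}" "j \<in> {1,2}" and z: "z \<in> Sp i i"
  shows "\<exists>xs\<in>lists (Sp i j \<times> Sp j i). (\<Sum>(x,y)\<leftarrow>xs. x * y) = z"
proof -
  obtain e where e: "e \<in> Rc" "e * z = z" using unit1 by blast
  have zL: "Lp i z = z" and zR: "Rp i z = z" using Sp_D z by auto
  show ?thesis
  proof (cases "j = 2")
    case True
    have "Lp i e \<in> Sp i 2" by (rule Sp_I) simp_all
    moreover have "z \<in> Sp 2 i" using zR by (intro Sp_I) simp_all
    moreover have "Lp i e * z = z" using Lp_mult[of i e z] e(2) zL by simp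
    ultimately show ?thesis using True by (intro bexI[of _ "[(Lp i e, z)]"]) auto
  next
    case False
    then have j: "j = 1" using ij by auto
    obtain ks where ks: "isdec e ks" using dk_prop e(1) by blast
    have ksR: "\<forall>(r,s)\<in>set ks. r \<in> Rc \<and> s \<in> Rc" using ks unfolding isdec_def by auto
    define xs where "xs = map (\<lambda>(r,s). (Lp i (Qm r), Pm (s*z))) ks"
    have m1: "Lp i (Qm r) \<in> Sp i 1" for r
    proof (rule Sp_I)
      show "Lp i (Lp i (Qm r)) = Lp i (Qm r)" by simp
      have "Rp 1 (Lp i (Qm r)) = Lp i (Rp 1 (Qm r))" by (rule LR_comm[symmetric])
      then show "Rp 1 (Lp i (Qm r)) = Lp i (Qm r)" by simp
    qed
    have m2: "Pm (s*z) \<in> Sp 1 i" for s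
    proof (rule Sp_I)
      show "Lp 1 (Pm (s*z)) = Pm (s*z)" by simp
      have "Rp i (Lp 1 (s*z)) = Lp 1 (Rp i (s*z))" by (rule LR_comm[symmetric])
      then show "Rp i (Pm (s*z)) = Pm (s*z)" using Rp_mult[of i s z] zR by simp
    qed
    have "xs \<in> lists (Sp i j \<times> Sp j i)" unfolding xs_def j using m1 m2 by auto
    moreover have "(\<Sum>(x,y)\<leftarrow>xs. x * y) = z"
    proof -
      have "(\<Sum>(x,y)\<leftarrow>xs. x * y) = (\<Sum>(r,s)\<leftarrow>ks. Lp i (r * pl s * z))"
        unfolding xs_def
      proof (simp add: case_prod_unfold o_def, intro arg_cong[where f=sum_list] map_cong refl)
        fix p assume "p \<in> set ks"
        then have s: "snd p \<in> Rc" using ksR by auto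
        have "Lp i (Qm (fst p)) * Pm (snd p * z) = Lp i (Qm (fst p) * Pm (snd p * z))" by (rule Lp_mult[symmetric])
        also have "Qm (fst p) * Pm (snd p * z) = Qm (fst p) * snd p * z" by (metis PQ5 Q_idem mult.assoc)
        also have "Qm (fst p) * snd p = fst p * pl (snd p)" using PQ5 P_R[OF s] by metis
        finally show "Lp i (Qm (fst p)) * Pm (snd p * z) = Lp i (fst p * pl (snd p) * z)" .
      qed
      also have "\<dots> = Lp i (e * z)" using ks unfolding isdec_def Lp_sum[symmetric] by (simp add: sum_mult_right2)
      finally show ?thesis using e(2) zL by simp
    qed
    ultimately show ?thesis by blast
  qed
qed

end

context L begin

lemma mem1: "Lp i (Qm r) \<in> Sp i 1"
proof (rule Sp_I)
  show "Lp i (Lp i (Qm r)) = Lp i (Qm r)" by simp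
  have "Rp 1 (Lp i (Qm r)) = Lp i (Rp 1 (Qm r))" by (rule LR_comm[symmetric])
  then show "Rp 1 (Lp i (Qm r)) = Lp i (Qm r)" by simp
qed
lemma mem2: "Rp i w = w \<Longrightarrow> Pm (s*w) \<in> Sp 1 i"
proof (rule Sp_I)
  assume zR: "Rp i w = w"
  show "Lp 1 (Pm (s*w)) = Pm (s*w)" by simp
  have "Rp i (Lp 1 (s*w)) = Lp 1 (Rp i (s*w))" by (rule LR_comm[symmetric])
  then show "Rp i (Pm (s*w)) = Pm (s*w)" using Rp_mult[of i s w] zR by simp
qed
lemma mem3: "Lp i e \<in> Sp i 2" by (rule Sp_I) simp_all
lemma mem4: "x \<in> Sp 2 2" by (simp add: pij_22)
lemma mem5: "Em a \<in> Sp 1 1" using pij_11 by simp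

lemma sumS: "zs \<in> lists (Sp i j \<times> Sp j l) \<Longrightarrow> \<forall>(x,y)\<in>set zs. x * y \<in> Sp i l"
proof
  fix p assume "zs \<in> lists (Sp i j \<times> Sp j l)" "p \<in> set zs"
  then have "fst p \<in> Sp i j" "snd p \<in> Sp j l" by auto
  then have "fst p * snd p \<in> Sp i l" by (rule pij_mult)
  then show "case p of (x,y) \<Rightarrow> x * y \<in> Sp i l" by (simp add: case_prod_unfold)
qed

lemma strict_inj2:
  assumes ij: "i \<in> {1,2}"
    and xs: "xs \<in> lists (Sp i 2 \<times> Sp 2 i)" and ys: "ys \<in> lists (Sp i 2 \<times> Sp 2 i)"
    and eq: "(\<Sum>(x,y)\<leftarrow>xs. x * y) = (\<Sum>(x,y)\<leftarrow>ys. x * y)"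
    and bil: "bilin_on scA scA (Sp i 2) (Sp 2 i) \<phi>"
    and bal: "\<forall>a\<in>Sp i 2. \<forall>r\<in>Sp 2 2. \<forall>b\<in>Sp 2 i. \<phi> (a * r) b = \<phi> a (r * b)"
  shows "(\<Sum>(x,y)\<leftarrow>xs. \<phi> x y) = (\<Sum>(x,y)\<leftarrow>ys. \<phi> x y)"
proof -
  obtain e where e: "e \<in> Rc" "\<forall>x\<in>fst ` set (xs @ ys). e * x = x" using units[of "fst ` set (xs @ ys)"] by auto
  have lji: "lsubspace scA (Sp 2 i)" using lsubSp ij by auto
  let ?u = "Lp i e"
  have u: "?u \<in> Sp i 2" using mem3 by simp
  have each: "\<phi> x y = \<phi> ?u (x*y)" if "(x,y) \<in> set (xs @ ys)" for x y
  proof -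
    have x: "x \<in> Sp i 2" "y \<in> Sp 2 i" using that xs ys by auto
    have "?u * x = Lp i (e * x)" by (rule Lp_mult[symmetric])
    also have "\<dots> = x" using e(2) that Sp_D(1)[OF x(1)] by force
    finally have ux: "?u * x = x" .
    have "\<phi> (?u * x) y = \<phi> ?u (x * y)" using bal u mem4 x(2) by blast
    then show ?thesis using ux by simp
  qed
  have tot: "(\<Sum>(x,y)\<leftarrow>zs. \<phi> x y) = \<phi> ?u (\<Sum>(x,y)\<leftarrow>zs. x*y)"
    if zs: "zs \<in> lists (Sp i 2 \<times> Sp 2 i)" "set zs \<subseteq> set (xs @ ys)" for zs
  proof -
    have "(\<Sum>(x,y)\<leftarrow>zs. \<phi> x y) = (\<Sum>(x,y)\<leftarrow>zs. \<phi> ?u (x*y))"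
      using each zs(2) by (intro sum_cong2) auto
    also have "\<dots> = \<phi> ?u (\<Sum>(x,y)\<leftarrow>zs. x*y)"
    proof (rule bil_sumr[OF bil lji _ u, symmetric])
      show "\<forall>(x,y)\<in>set zs. x * y \<in> Sp 2 i"
      proof
        fix p assume "p \<in> set zs"
        then have "fst p \<in> Sp 2 2" "snd p \<in> Sp 2 i" using zs(1) mem4 by auto
        then have "fst p * snd p \<in> Sp 2 i" by (rule pij_mult)
        then show "case p of (x,y) \<Rightarrow> x * y \<in> Sp 2 i" by (simp add: case_prod_unfold)
      qed
    qed
    finally show ?thesis .
  qed
  show ?thesis using tot[OF xs] tot[OF ys] eq by simp
qed

lemma strict_inj1:
  assumes ij: "i \<in> {1,2}"
    and xs: "xs \<in> lists (Sp i 1 \<times> Sp 1 i)" and ys: "ys \<in> lists (Sp i 1 \<times> Sp 1 i)"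
    and eq: "(\<Sum>(x,y)\<leftarrow>xs. x * y) = (\<Sum>(x,y)\<leftarrow>ys. x * y)"
    and bil: "bilin_on scA scA (Sp i 1) (Sp 1 i) \<phi>"
    and bal: "\<forall>a\<in>Sp i 1. \<forall>r\<in>Sp 1 1. \<forall>b\<in>Sp 1 i. \<phi> (a * r) b = \<phi> a (r * b)"
  shows "(\<Sum>(x,y)\<leftarrow>xs. \<phi> x y) = (\<Sum>(x,y)\<leftarrow>ys. \<phi> x y)"
proof -
  obtain e where e: "e \<in> Rc" "\<forall>x\<in>fst ` set (xs @ ys). e * x = x" using units[of "fst ` set (xs @ ys)"] by auto
  have lij: "lsubspace scA (Sp i 1)" and lji: "lsubspace scA (Sp 1 i)" using lsubSp ij by auto
  obtain ks where ks: "isdec e ks" using dk_prop e(1) by blast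
  have ksR: "\<forall>(r,s)\<in>set ks. r \<in> Rc \<and> s \<in> Rc" using ks unfolding isdec_def by auto
  have each: "\<phi> x y = (\<Sum>(r,s)\<leftarrow>ks. \<phi> (Lp i (Qm r)) (Pm (s*(x*y))))" if xy: "(x,y) \<in> set (xs @ ys)" for x y
  proof -
    have x: "x \<in> Sp i 1" "y \<in> Sp 1 i" using xy xs ys by auto
    have xL: "Lp i x = x" and xQ: "Qm x = x" using Sp_D[OF x(1)] by auto
    have ex: "e * x = x" using e(2) xy by force
    have EP': "Em (s*x) = Pm (s*x)" for s unfolding Em_def by (simp add: Q_mult xQ)
    have t: "Lp i (Qm r) * Em (s*x) = Lp i (r * pl s * x)" if s: "s \<in> Rc" for r s
    proof -
      have "Lp i (Qm r) * Em (s*x) = Lp i (Qm r * Pm (s*x))" by (simp add: Lp_mult EP')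
      also have "Qm r * Pm (s*x) = Qm r * s * x" by (metis PQ5 Q_idem mult.assoc)
      also have "Qm r * s = r * pl s" using PQ5 P_R[OF s] by metis
      finally show ?thesis .
    qed
    have xsum: "x = (\<Sum>(r,s)\<leftarrow>ks. Lp i (Qm r) * Em (s*x))"
    proof -
      have "(\<Sum>(r,s)\<leftarrow>ks. Lp i (Qm r) * Em (s*x)) = (\<Sum>(r,s)\<leftarrow>ks. Lp i (r * pl s * x))"
        using t ksR by (intro sum_cong2) auto
      also have "\<dots> = Lp i (e * x)" using ks unfolding isdec_def Lp_sum[symmetric] by (simp add: sum_mult_right2)
      finally show ?thesis using ex xL by simp
    qed
    have inS: "\<forall>(r,s)\<in>set ks. Lp i (Qm r) * Em (s*x) \<in> Sp i 1"
      using pij_mult[OF mem1 mem5] by auto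
    have "\<phi> x y = \<phi> (\<Sum>(r,s)\<leftarrow>ks. Lp i (Qm r) * Em (s*x)) y"
      using xsum by (rule arg_cong[where f="\<lambda>z. \<phi> z y"])
    also have "\<dots> = (\<Sum>(r,s)\<leftarrow>ks. \<phi> (Lp i (Qm r) * Em (s*x)) y)"
      by (rule bil_suml[OF bil lij inS x(2)])
    also have "\<dots> = (\<Sum>(r,s)\<leftarrow>ks. \<phi> (Lp i (Qm r)) (Em (s*x) * y))"
    proof (intro sum_cong2)
      fix r s show "\<phi> (Lp i (Qm r) * Em (s*x)) y = \<phi> (Lp i (Qm r)) (Em (s*x) * y)"
        using bal mem1 mem5 x(2) by blast
    qed
    also have "\<dots> = (\<Sum>(r,s)\<leftarrow>ks. \<phi> (Lp i (Qm r)) (Pm (s*(x*y))))"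
      by (intro sum_cong2) (simp add: EP' P_mult mult.assoc)
    finally show ?thesis .
  qed
  have tot: "(\<Sum>(x,y)\<leftarrow>zs. \<phi> x y) = (\<Sum>(r,s)\<leftarrow>ks. \<phi> (Lp i (Qm r)) (Pm (s*(\<Sum>(x,y)\<leftarrow>zs. x*y))))"
    if zs: "zs \<in> lists (Sp i 1 \<times> Sp 1 i)" "set zs \<subseteq> set (xs @ ys)" for zs
  proof -
    have "(\<Sum>(x,y)\<leftarrow>zs. \<phi> x y) = (\<Sum>(x,y)\<leftarrow>zs. \<Sum>(r,s)\<leftarrow>ks. \<phi> (Lp i (Qm r)) (Pm (s*(x*y))))"
      using each zs(2) by (intro sum_cong2) auto
    also have "\<dots> = (\<Sum>(r,s)\<leftarrow>ks. \<Sum>(x,y)\<leftarrow>zs. \<phi> (Lp i (Qm r)) (Pm (s*(x*y))))" by (rule sum_swap2)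
    also have "\<dots> = (\<Sum>(r,s)\<leftarrow>ks. \<phi> (Lp i (Qm r)) (\<Sum>(x,y)\<leftarrow>zs. Pm (s*(x*y))))"
    proof (intro sum_cong2)
      fix r s
      have "\<forall>(x,y)\<in>set zs. Pm (s*(x*y)) \<in> Sp 1 i"
      proof
        fix p assume "p \<in> set zs"
        then have "fst p \<in> Sp i 1" "snd p \<in> Sp 1 i" using zs(1) by auto
        then have "fst p * snd p \<in> Sp i i" by (rule pij_mult)
        then have "Pm (s * (fst p * snd p)) \<in> Sp 1 i" using mem2 Sp_D(2) by blast
        then show "case p of (x,y) \<Rightarrow> Pm (s*(x*y)) \<in> Sp 1 i" by (simp add: case_prod_unfold)
      qed
      from bil_sumr[OF bil lji this mem1[of i r]]
      show "(\<Sum>(x,y)\<leftarrow>zs. \<phi> (Lp i (Qm r)) (Pm (s*(x*y)))) = \<phi> (Lp i (Qm r)) (\<Sum>(x,y)\<leftarrow>zs. Pm (s*(x*y)))" ..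
    qed
    also have "\<dots> = (\<Sum>(r,s)\<leftarrow>ks. \<phi> (Lp i (Qm r)) (Pm (s*(\<Sum>(x,y)\<leftarrow>zs. x*y))))"
      by (intro sum_cong2) (simp add: lin_sum[OF P_lin] sum_mult_left2)
    finally show ?thesis .
  qed
  show ?thesis using tot[OF xs] tot[OF ys] eq by simp
qed

lemma strict_inj:
  assumes ij: "i \<in> {1,2}" "j \<in> {1,2}"
    and xs: "xs \<in> lists (Sp i j \<times> Sp j i)" and ys: "ys \<in> lists (Sp i j \<times> Sp j i)"
    and eq: "(\<Sum>(x,y)\<leftarrow>xs. x * y) = (\<Sum>(x,y)\<leftarrow>ys. x * y)"
  shows "btensor_eq scA (Sp i j) (Sp j i) (Sp j j) xs ys"
  unfolding btensor_eq_def
proof safe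
  fix \<phi> assume bil: "bilin_on scA scA (Sp i j) (Sp j i) \<phi>"
    and bal: "\<forall>a\<in>Sp i j. \<forall>r\<in>Sp j j. \<forall>b\<in>Sp j i. \<phi> (a * r) b = \<phi> a (r * b)"
  show "(\<Sum>(x,y)\<leftarrow>xs. \<phi> x y) = (\<Sum>(x,y)\<leftarrow>ys. \<phi> x y)"
  proof (cases "j = 2")
    case True
    show ?thesis using strict_inj2[OF ij(1) _ _ eq, of \<phi>] xs ys bil bal True by blast
  next
    case False
    then have "j = 1" using ij by auto
    then show ?thesis using strict_inj1[OF ij(1) _ _ eq, of \<phi>] xs ys bil bal by blast
  qed
qed

end

context L begin

lemma Em_eq: "Em = (\<lambda>a. Pm (Qm a))" unfolding Em_def by auto

lemma corner_eq: "i \<in> {1,2} \<Longrightarrow> j \<in> {1,2} \<Longrightarrow>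
  corner_context (range (\<lambda>a. Pm (Qm a))) (range Pm) (range Qm) i j = Sp i j"
  unfolding corner_context_def using pij_11 pij_12 pij_21 pij_22 Em_eq by auto

lemma main_L:
  "let R = coinv scA scH UNIV \<alpha>;
             B = range (\<lambda>a. mext_l R pl (mext_r R pr a));
             pA = range (mext_l R pl);
             Ap = range (mext_r R pr)
         in (\<exists>\<beta>. (\<forall>b\<in>B. tensor_eq scA scH UNIV UNIV (\<beta> b) (\<alpha> b)) \<and>
                 galois_coaction scA scH \<Delta> \<epsilon> B \<beta>) \<and>
            (\<exists>gam. (\<forall>i\<in>{1,2}. \<forall>j\<in>{1,2}. \<forall>x\<in>corner_context B pA Ap i j.
                        tensor_eq scA scH UNIV UNIV (gam i j x) (\<alpha> x)) \<and>
                   strict_equivariant_morita_context scA scH \<Delta> \<epsilon> (corner_context B pA Ap) gam)"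
  unfolding Let_def
proof (intro conjI)
  show "\<exists>\<beta>. (\<forall>b\<in>range (\<lambda>a. Pm (Qm a)). TE (\<beta> b) (\<alpha> b)) \<and> galois_coaction scA scH \<Delta> \<epsilon> (range (\<lambda>a. Pm (Qm a))) \<beta>"
    using gm_alpha[OF good_E] B_galois unfolding Em_eq by blast
  let ?C = "corner_context (range (\<lambda>a. Pm (Qm a))) (range Pm) (range Qm)"
  let ?g = "\<lambda>i j. gm (pij i j)"
  have c1: "\<forall>i\<in>{1,2}. \<forall>j\<in>{1,2}. \<forall>x\<in>?C i j. TE (?g i j x) (\<alpha> x)"
  proof (intro ballI)
    fix i j x assume ij: "i \<in> {1::nat,2}" "j \<in> {1::nat,2}" and x: "x \<in> ?C i j"
    show "TE (?g i j x) (\<alpha> x)" using gm_alpha[OF good_pij[OF ij]] x corner_eq[OF ij] by simp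
  qed
  have c2: "strict_equivariant_morita_context scA scH \<Delta> \<epsilon> ?C ?g"
    unfolding strict_equivariant_morita_context_def
  proof (intro conjI ballI)
    fix i j assume ij: "i \<in> {1::nat,2}" "j \<in> {1::nat,2}"
    show "comodule_on scA scH \<Delta> \<epsilon> (?C i j) (?g i j)"
      unfolding corner_eq[OF ij] by (rule comod_gen[OF good_pij[OF ij]])
  next
    fix i j l x y assume ij: "i \<in> {1::nat,2}" "j \<in> {1::nat,2}" "l \<in> {1::nat,2}"
      and x: "x \<in> ?C i j" and y: "y \<in> ?C j l"
    have x': "x \<in> Sp i j" and y': "y \<in> Sp j l" using x y corner_eq ij by auto
    show "x * y \<in> ?C i l" unfolding corner_eq[OF ij(1,3)] by (rule pij_mult[OF x' y'])
    show "tensor_eq scA scH (?C i l) UNIV (?g i l (x * y)) (tprod (?g i j x) (?g j l y))"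
      unfolding corner_eq[OF ij(1,3)] by (rule mult_pij[OF ij x' y'])
  next
    fix i j xs ys assume ij: "i \<in> {1::nat,2}" "j \<in> {1::nat,2}"
      and xs: "xs \<in> lists (?C i j \<times> ?C j i)" and ys: "ys \<in> lists (?C i j \<times> ?C j i)"
    show "(\<Sum>(x,y)\<leftarrow>xs. x * y) = (\<Sum>(x,y)\<leftarrow>ys. x * y) \<longrightarrow>
           btensor_eq scA (?C i j) (?C j i) (?C j j) xs ys"
      using xs ys unfolding corner_eq[OF ij] corner_eq[OF ij(2,1)] corner_eq[OF ij(2,2)]
      using strict_inj[OF ij] by blast
  next
    fix i j z assume ij: "i \<in> {1::nat,2}" "j \<in> {1::nat,2}" and z: "z \<in> ?C i i"
    show "\<exists>xs\<in>lists (?C i j \<times> ?C j i). (\<Sum>(x,y)\<leftarrow>xs. x * y) = z"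
      using z unfolding corner_eq[OF ij] corner_eq[OF ij(2,1)] corner_eq[OF ij(1,1)]
      using strict_surj[OF ij] by blast
  qed
  show "\<exists>gam. (\<forall>i\<in>{1,2}. \<forall>j\<in>{1,2}. \<forall>x\<in>?C i j. TE (gam i j x) (\<alpha> x)) \<and>
          strict_equivariant_morita_context scA scH \<Delta> \<epsilon> ?C gam"
    by (rule exI[of _ ?g]) (use c1 c2 in simp)
qed

end

theorem mainTheorem7:
  fixes scA :: "'k::field \<Rightarrow> 'a::ring \<Rightarrow> 'a"
    and scH :: "'k \<Rightarrow> 'h::ring_1 \<Rightarrow> 'h"
    and \<Delta> :: "'h \<Rightarrow> ('h \<times> 'h) list" and \<epsilon> :: "'h \<Rightarrow> 'k" and S :: "'h \<Rightarrow> 'h"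
    and \<alpha> :: "'a \<Rightarrow> ('a \<times> 'h) list"
    and pl pr :: "'a \<Rightarrow> 'a"
  assumes hopf: "hopf_algebra scH \<Delta> \<epsilon> S"
    and alg: "algebra_over scA"
    and gal: "galois_coaction scA scH \<Delta> \<epsilon> UNIV \<alpha>"
    and lu: "coinv_local_units scA scH \<alpha>"
    and mult: "multiplier_on scA (coinv scA scH UNIV \<alpha>) pl pr"
    and idem: "idempotent_multiplier (coinv scA scH UNIV \<alpha>) pl pr"
    and full: "module.span scA {x * pl y | x y. x \<in> coinv scA scH UNIV \<alpha> \<and> y \<in> coinv scA scH UNIV \<alpha>}
               = coinv scA scH UNIV \<alpha>"
  shows "let R = coinv scA scH UNIV \<alpha>;
             B = range (\<lambda>a. mext_l R pl (mext_r R pr a));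
             pA = range (mext_l R pl);
             Ap = range (mext_r R pr)
         in (\<exists>\<beta>. (\<forall>b\<in>B. tensor_eq scA scH UNIV UNIV (\<beta> b) (\<alpha> b)) \<and>
                 galois_coaction scA scH \<Delta> \<epsilon> B \<beta>) \<and>
            (\<exists>gam. (\<forall>i\<in>{1,2}. \<forall>j\<in>{1,2}. \<forall>x\<in>corner_context B pA Ap i j.
                        tensor_eq scA scH UNIV UNIV (gam i j x) (\<alpha> x)) \<and>
                   strict_equivariant_morita_context scA scH \<Delta> \<epsilon> (corner_context B pA Ap) gam)"
proof -
  interpret L scA scH \<Delta> \<epsilon> S \<alpha> pl pr
    using assms by unfold_locales
  show ?thesis by (rule main_L)
qed


end
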